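(* Let $C$ be the hyperelliptic curve $y^2=h(x):=a(x-x_1)\cdots(x-x_{2g+1})$ over $\mathbb C$ with $a\ne0$ and distinct $x_i$, let $X$ be its smooth projective model (genus $g$) and $P_0$ the unique point of $X$ over infinity. Let $D^+,D^-$ be effective divisors supported on finite points of $C$, and let $J:=(I_{D^+}\overline{I_{D^-}},I_C)$. Let $f=p(x)+q(x)y$ be an element of $J\setminus I_C$, written in this reduced form modulo $y^2-h(x)$, whose leading monomial is minimal among all elements of $J\setminus I_C$ with respect to the monomial order below. Then the divisor of $f$ on $X$ is $D^++\overline{D^-}+E-\deg_w(f)P_0$ for an effective divisor $E$ of finite points of degree $t=\deg_w(f)-\deg D^+-\deg D^-$, and $\overline E-tP_0$ is the reduced divisor linearly equivalent to $D^+-D^--(\deg D^+-\deg D^-)P_0$.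
   Context: $I_C=(y^2-h(x))\subset\mathbb C[x,y]$. For a finite point $P=(x_P,y_P)$, $I_P=(x-x_P,y-y_P,I_C)$; for an effective divisor $E=\sum m_iP_i$ of finite points, $I_E=\bigcap_i(I_{P_i}^{m_i},I_C)$. The involution $\iota(x,y)=(x,-y)$ acts on divisors ($\overline{E}=\iota(E)$) and on ideals ($\overline I=\{f(x,-y):f\in I\}$). The monomial order: first by weighted degree $\deg_w(x^ay^b)=(2g+1)a+2b$, ties broken lexicographically with $y>x$; $\deg_w(f)$ is the weighted degree of the leading monomial. A semireduced divisor is $P_1+\cdots+P_t-tP_0$ with $P_i\in X\setminus\{P_0\}$; it is reduced if no linearly equivalent semireduced divisor $P'_1+\cdots+P'_s-sP_0$ has $s<t$. *)

theory Defs
  imports "HOL-Computational_Algebra.Polynomial"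
begin

text \<open>Bivariate polynomials C[x,y] are modelled as complex poly poly:
  a polynomial in y whose coefficients are polynomials in x.
  The monomial x^a y^b of F has coefficient coeff (coeff F b) a.\<close>

type_synonym bpoly = "complex poly poly"
type_synonym point = "complex \<times> complex"
type_synonym divisor = "point option \<Rightarrow> int"  \<comment> \<open>None = P0, Some P = finite point P\<close>

inductive_set gen_ideal :: "'a::comm_ring_1 set \<Rightarrow> 'a set" for S where
  zero: "0 \<in> gen_ideal S"
| gen: "s \<in> S \<Longrightarrow> s \<in> gen_ideal S"
| add: "a \<in> gen_ideal S \<Longrightarrow> b \<in> gen_ideal S \<Longrightarrow> a + b \<in> gen_ideal S"
| mult: "a \<in> gen_ideal S \<Longrightarrow> r * a \<in> gen_ideal S"

definition ideal_prod :: "'a::comm_ring_1 set \<Rightarrow> 'a set \<Rightarrow> 'a set" where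
  "ideal_prod I J = gen_ideal {a * b | a b. a \<in> I \<and> b \<in> J}"

fun ideal_pow :: "'a::comm_ring_1 set \<Rightarrow> nat \<Rightarrow> 'a set" where
  "ideal_pow I 0 = UNIV"
| "ideal_pow I (Suc n) = ideal_prod I (ideal_pow I n)"

definition X_var :: bpoly where "X_var = [: [:0, 1:] :]"
definition Y_var :: bpoly where "Y_var = [: 0, 1 :]"

definition curve_eq :: "complex poly \<Rightarrow> bpoly" where
  "curve_eq h = [: -h, 0, 1 :]"

definition I_C :: "complex poly \<Rightarrow> bpoly set" where
  "I_C h = gen_ideal {curve_eq h}"

definition on_curve :: "complex poly \<Rightarrow> point \<Rightarrow> bool" where
  "on_curve h P \<longleftrightarrow> (snd P)^2 = poly h (fst P)"

definition I_pt :: "complex poly \<Rightarrow> point \<Rightarrow> bpoly set" where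
  "I_pt h P = gen_ideal {X_var - [: [: fst P :] :], Y_var - [: [: snd P :] :], curve_eq h}"

definition effective :: "complex poly \<Rightarrow> (point \<Rightarrow> nat) \<Rightarrow> bool" where
  "effective h E \<longleftrightarrow> finite {P. E P \<noteq> 0} \<and> (\<forall>P. E P \<noteq> 0 \<longrightarrow> on_curve h P)"

definition deg_eff :: "(point \<Rightarrow> nat) \<Rightarrow> nat" where
  "deg_eff E = (\<Sum>P\<in>{P. E P \<noteq> 0}. E P)"

definition I_div :: "complex poly \<Rightarrow> (point \<Rightarrow> nat) \<Rightarrow> bpoly set" where
  "I_div h E = (\<Inter>P\<in>{P. E P \<noteq> 0}. gen_ideal (ideal_pow (I_pt h P) (E P) \<union> I_C h))"

definition iota :: "point \<Rightarrow> point" where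
  "iota P = (fst P, - snd P)"

definition conj_bp :: "bpoly \<Rightarrow> bpoly" where
  "conj_bp F = F \<circ>\<^sub>p [: 0, -1 :]"

definition conj_ideal :: "bpoly set \<Rightarrow> bpoly set" where
  "conj_ideal I = conj_bp ` I"

definition supp :: "bpoly \<Rightarrow> (nat \<times> nat) set" where
  "supp F = {(a, b). coeff (coeff F b) a \<noteq> 0}"

definition wdeg :: "nat \<Rightarrow> nat \<times> nat \<Rightarrow> nat" where
  "wdeg g m = 2 * fst m + (2 * g + 1) * snd m"

definition mono_less :: "nat \<Rightarrow> nat \<times> nat \<Rightarrow> nat \<times> nat \<Rightarrow> bool" where
  "mono_less g m m' \<longleftrightarrow> wdeg g m < wdeg g m' \<or>
     (wdeg g m = wdeg g m' \<and> (snd m < snd m' \<or> (snd m = snd m' \<and> fst m < fst m')))"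

definition lead_mono :: "nat \<Rightarrow> bpoly \<Rightarrow> nat \<times> nat" where
  "lead_mono g F = (THE m. m \<in> supp F \<and> (\<forall>m'\<in>supp F. m' \<noteq> m \<longrightarrow> mono_less g m' m))"

definition deg_w :: "nat \<Rightarrow> bpoly \<Rightarrow> nat" where
  "deg_w g F = wdeg g (lead_mono g F)"

definition ord_fin :: "complex poly \<Rightarrow> point \<Rightarrow> bpoly \<Rightarrow> nat" where
  "ord_fin h P F = (GREATEST m. F \<in> gen_ideal (ideal_pow (I_pt h P) m \<union> I_C h))"

definition ord_inf :: "nat \<Rightarrow> complex poly \<Rightarrow> bpoly \<Rightarrow> int" where
  "ord_inf g h F = - int (deg_w g (pseudo_mod F (curve_eq h)))"

definition div_of :: "nat \<Rightarrow> complex poly \<Rightarrow> bpoly \<Rightarrow> divisor" where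
  "div_of g h F = (\<lambda>Q. case Q of None \<Rightarrow> ord_inf g h F
        | Some P \<Rightarrow> (if on_curve h P then int (ord_fin h P F) else 0))"

definition lin_equiv :: "nat \<Rightarrow> complex poly \<Rightarrow> divisor \<Rightarrow> divisor \<Rightarrow> bool" where
  "lin_equiv g h D D' \<longleftrightarrow> (\<exists>F G. F \<notin> I_C h \<and> G \<notin> I_C h \<and>
       (\<forall>Q. D Q - D' Q = div_of g h F Q - div_of g h G Q))"

definition semired :: "(point \<Rightarrow> nat) \<Rightarrow> divisor" where
  "semired E = (\<lambda>Q. case Q of None \<Rightarrow> - int (deg_eff E) | Some P \<Rightarrow> int (E P))"

definition is_reduced :: "nat \<Rightarrow> complex poly \<Rightarrow> divisor \<Rightarrow> bool" where
  "is_reduced g h D \<longleftrightarrow> (\<exists>E. effective h E \<and> D = semired E \<and>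
      (\<forall>E'. effective h E' \<and> lin_equiv g h (semired E') D \<longrightarrow> deg_eff E \<le> deg_eff E'))"

end

theory Submission
  imports Defs "HOL-Computational_Algebra.Polynomial_FPS" "HOL-Computational_Algebra.Fundamental_Theorem_Algebra"
begin

unbundle fps_syntax


definition is_id :: "'a::comm_ring_1 set \<Rightarrow> bool" where
  "is_id I \<longleftrightarrow> 0 \<in> I \<and> (\<forall>a\<in>I. \<forall>b\<in>I. a + b \<in> I) \<and> (\<forall>r. \<forall>a\<in>I. r * a \<in> I)"

lemma is_idI: "0 \<in> I \<Longrightarrow> (\<And>a b. a \<in> I \<Longrightarrow> b \<in> I \<Longrightarrow> a + b \<in> I) \<Longrightarrow> (\<And>r a. a \<in> I \<Longrightarrow> r * a \<in> I) \<Longrightarrow> is_id I"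
  unfolding is_id_def by blast

lemma is_id_gen: "is_id (gen_ideal S)"
  by (auto simp: is_id_def intro: gen_ideal.intros)

lemma is_id_UNIV: "is_id UNIV" by (auto simp: is_id_def)

lemma is_id_0: "is_id I \<Longrightarrow> 0 \<in> I" by (simp add: is_id_def)
lemma is_id_add: "is_id I \<Longrightarrow> a \<in> I \<Longrightarrow> b \<in> I \<Longrightarrow> a + b \<in> I" by (simp add: is_id_def)
lemma is_id_mult: "is_id I \<Longrightarrow> a \<in> I \<Longrightarrow> r * a \<in> I" by (simp add: is_id_def)
lemma is_id_mult2: "is_id I \<Longrightarrow> a \<in> I \<Longrightarrow> a * r \<in> I" by (metis is_id_mult mult.commute)
lemma is_id_uminus: "is_id I \<Longrightarrow> a \<in> I \<Longrightarrow> - a \<in> I"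
  by (metis is_id_mult mult_minus1)
lemma is_id_diff: "is_id I \<Longrightarrow> a \<in> I \<Longrightarrow> b \<in> I \<Longrightarrow> a - b \<in> I"
  by (metis is_id_add is_id_uminus diff_conv_add_uminus)
lemma is_id_sum: "is_id I \<Longrightarrow> (\<And>i. i \<in> A \<Longrightarrow> f i \<in> I) \<Longrightarrow> sum f A \<in> I"
  by (induction A rule: infinite_finite_induct) (auto intro: is_id_0 is_id_add)

lemma is_id_Inter: "(\<And>I. I \<in> K \<Longrightarrow> is_id I) \<Longrightarrow> is_id (\<Inter>K)"
  by (auto simp: is_id_def)

lemma gen_ideal_least: "S \<subseteq> I \<Longrightarrow> is_id I \<Longrightarrow> gen_ideal S \<subseteq> I"
proof
  fix x assume a: "S \<subseteq> I" "is_id I" and xg: "x \<in> gen_ideal S"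
  from xg show "x \<in> I"
    by (induction x rule: gen_ideal.induct) (use a in \<open>auto intro: is_id_0 is_id_add is_id_mult\<close>)
qed

lemma gen_ideal_induct_id[consumes 1]:
  assumes "x \<in> gen_ideal S" "is_id I" "\<And>s. s \<in> S \<Longrightarrow> s \<in> I"
  shows "x \<in> I"
  using gen_ideal_least[of S I] assms by blast

lemma gen_ideal_mono: "S \<subseteq> T \<Longrightarrow> gen_ideal S \<subseteq> gen_ideal T"
  by (rule gen_ideal_least) (auto intro: gen_ideal.gen is_id_gen)

lemma gen_ideal_gen: "s \<in> S \<Longrightarrow> s \<in> gen_ideal S" by (rule gen_ideal.gen)

lemma gen_ideal_id: "is_id I \<Longrightarrow> gen_ideal I = I"
  by (auto intro: gen_ideal.gen dest: gen_ideal_least[of I I, OF order_refl])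

lemma gen_ideal_singleton: "gen_ideal {s} = {r * s |r. True}"
proof
  have "is_id {r * s |r. True}"
  proof (rule is_idI)
    show "0 \<in> {r * s |r. True}" by (rule CollectI, rule exI[of _ 0]) simp
    show "a + b \<in> {r * s |r. True}" if "a \<in> {r * s |r. True}" "b \<in> {r * s |r. True}" for a b
      using that by (auto simp: distrib_right[symmetric])
    show "r * a \<in> {r * s |r. True}" if "a \<in> {r * s |r. True}" for r a
      using that by (auto simp: mult.assoc[symmetric])
  qed
  then show "gen_ideal {s} \<subseteq> {r * s |r. True}"
    by (rule gen_ideal_least[rotated]) (auto intro: exI[of _ 1])
  show "{r * s |r. True} \<subseteq> gen_ideal {s}"
    by (auto intro: gen_ideal.mult gen_ideal.gen)
qed

lemma is_id_ideal_prod: "is_id (ideal_prod I J)"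
  by (simp add: ideal_prod_def is_id_gen)

lemma ideal_prod_mem: "a \<in> I \<Longrightarrow> b \<in> J \<Longrightarrow> a * b \<in> ideal_prod I J"
  unfolding ideal_prod_def by (rule gen_ideal.gen) blast

lemma ideal_prod_least: "(\<And>a b. a \<in> I \<Longrightarrow> b \<in> J \<Longrightarrow> a * b \<in> K) \<Longrightarrow> is_id K \<Longrightarrow> ideal_prod I J \<subseteq> K"
  unfolding ideal_prod_def by (rule gen_ideal_least) auto

lemma ideal_prod_mono: "I \<subseteq> I' \<Longrightarrow> J \<subseteq> J' \<Longrightarrow> ideal_prod I J \<subseteq> ideal_prod I' J'"
  by (rule ideal_prod_least) (auto intro: ideal_prod_mem is_id_ideal_prod)

lemma is_id_ideal_pow: "is_id (ideal_pow I n)"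
  by (cases n) (auto simp: is_id_UNIV is_id_ideal_prod)

lemma ideal_pow_mult:
  assumes "is_id I"
  shows "x \<in> ideal_pow I a \<Longrightarrow> y \<in> ideal_pow I b \<Longrightarrow> x * y \<in> ideal_pow I (a + b)"
proof (induction a arbitrary: x y)
  case 0
  then show ?case using is_id_mult[OF is_id_ideal_pow] by simp
next
  case (Suc a)
  have J: "is_id (ideal_pow I (Suc a + b))" by (rule is_id_ideal_pow)
  have "is_id {x. x * y \<in> ideal_pow I (Suc a + b)}"
    by (rule is_idI) (use J in \<open>auto simp: distrib_right mult.assoc
        intro: is_id_add is_id_mult is_id_0\<close>)
  moreover have "ideal_prod I (ideal_pow I a) \<subseteq> {x. x * y \<in> ideal_pow I (Suc a + b)}"
  proof (rule ideal_prod_least[OF _ calculation])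
    fix i w assume "i \<in> I" "w \<in> ideal_pow I a"
    then have "w * y \<in> ideal_pow I (a + b)" using Suc by blast
    then have "i * (w * y) \<in> ideal_pow I (Suc a + b)"
      using \<open>i \<in> I\<close> by (simp add: ideal_prod_mem)
    then show "i * w \<in> {x. x * y \<in> ideal_pow I (Suc a + b)}" by (simp add: mult.assoc)
  qed
  then show ?case using Suc.prems by auto
qed

lemma ideal_pow_1: "is_id I \<Longrightarrow> x \<in> I \<Longrightarrow> x \<in> ideal_pow I (Suc 0)"
  using ideal_prod_mem[of x I 1 UNIV] by simp

lemma ideal_pow_Suc_sub: "is_id I \<Longrightarrow> ideal_pow I (Suc n) \<subseteq> ideal_pow I n"
proof (induction n)
  case 0 then show ?case by simp
next
  case (Suc n)
  show ?case
    by (simp, rule ideal_prod_mono) (use Suc in auto)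
qed

lemma ideal_pow_antimono: "is_id I \<Longrightarrow> m \<le> n \<Longrightarrow> ideal_pow I n \<subseteq> ideal_pow I m"
proof -
  assume I: "is_id I" and mn: "m \<le> n"
  from mn show ?thesis
  proof (induction n rule: dec_induct)
    case (step n) then show ?case using ideal_pow_Suc_sub[OF I, of n] by blast
  qed simp
qed

lemma ideal_pow_sub: "is_id I \<Longrightarrow> ideal_pow I (Suc n) \<subseteq> I"
proof -
  assume I: "is_id I"
  show ?thesis by (simp, rule ideal_prod_least) (auto intro: is_id_mult2 I)
qed

definition Mid :: "'a::comm_ring_1 set \<Rightarrow> 'a set \<Rightarrow> nat \<Rightarrow> 'a set" where
  "Mid I C m = gen_ideal (ideal_pow I m \<union> C)"

lemma is_id_Mid: "is_id (Mid I C m)" by (simp add: Mid_def is_id_gen)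

lemma Mid_C: "c \<in> C \<Longrightarrow> c \<in> Mid I C m" by (simp add: Mid_def gen_ideal.gen)
lemma Mid_pow: "c \<in> ideal_pow I m \<Longrightarrow> c \<in> Mid I C m" by (simp add: Mid_def gen_ideal.gen)
lemma Mid_0: "Mid I C 0 = UNIV" by (auto simp: Mid_def intro: gen_ideal.gen)

lemma Mid_mult:
  assumes I: "is_id I" and C: "is_id C"
  shows "x \<in> Mid I C a \<Longrightarrow> y \<in> Mid I C b \<Longrightarrow> x * y \<in> Mid I C (a + b)"
proof -
  assume x: "x \<in> Mid I C a" and y: "y \<in> Mid I C b"
  have "is_id {x. x * y \<in> Mid I C (a + b)}"
    by (rule is_idI) (auto simp: distrib_right mult.assoc intro: is_id_add is_id_mult is_id_0 is_id_Mid)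
  moreover have "x * y \<in> Mid I C (a + b)" if "x \<in> ideal_pow I a \<union> C" for x
  proof -
    have "is_id {y. x * y \<in> Mid I C (a + b)}"
      by (rule is_idI) (auto simp: distrib_left mult.left_commute intro: is_id_add is_id_mult is_id_0 is_id_Mid)
    moreover have "x * y \<in> Mid I C (a + b)" if "y \<in> ideal_pow I b \<union> C" for y
    proof (cases "x \<in> C \<or> y \<in> C")
      case True
      then have "x * y \<in> C" using C is_id_mult is_id_mult2 by blast
      then show ?thesis by (rule Mid_C)
    next
      case False
      then show ?thesis using that \<open>x \<in> ideal_pow I a \<union> C\<close>
        by (auto intro!: Mid_pow ideal_pow_mult I)
    qed
    ultimately have "y \<in> {y. x * y \<in> Mid I C (a + b)}"
      using gen_ideal_induct_id[of y "ideal_pow I b \<union> C" "{y. x * y \<in> Mid I C (a + b)}"] y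
      unfolding Mid_def by blast
    then show ?thesis by simp
  qed
  ultimately have "x \<in> {x. x * y \<in> Mid I C (a + b)}"
    using gen_ideal_induct_id[of x "ideal_pow I a \<union> C" "{x. x * y \<in> Mid I C (a + b)}"] x
    unfolding Mid_def by blast
  then show ?thesis by simp
qed

lemma Mid_antimono: "is_id I \<Longrightarrow> m \<le> n \<Longrightarrow> Mid I C n \<subseteq> Mid I C m"
  unfolding Mid_def by (rule gen_ideal_mono) (use ideal_pow_antimono in blast)



lemma Xpow_dvd_iff: "fps_X ^ m dvd (f::complex fps) \<longleftrightarrow> f = 0 \<or> m \<le> subdegree f"
proof (cases "f = 0")
  case False
  have "fps_X ^ m \<noteq> (0::complex fps)" by simp
  then show ?thesis using fps_dvd_iff[of "fps_X ^ m" f] False by simp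
qed simp

lemma Xpow_dvd_iff': "fps_X ^ m dvd (f::complex fps) \<longleftrightarrow> (\<forall>i<m. f $ i = 0)"
  unfolding Xpow_dvd_iff
proof
  assume a: "f = 0 \<or> m \<le> subdegree f"
  show "\<forall>i<m. f $ i = 0"
  proof (intro allI impI)
    fix i assume "i < m"
    show "f $ i = 0"
    proof (cases "f = 0")
      case False
      then have "i < subdegree f" using a \<open>i < m\<close> by linarith
      then show ?thesis by (rule nth_less_subdegree_zero)
    qed simp
  qed
next
  assume a: "\<forall>i<m. f $ i = 0"
  show "f = 0 \<or> m \<le> subdegree f"
  proof (rule ccontr)
    assume "\<not> (f = 0 \<or> m \<le> subdegree f)"
    then have "f \<noteq> 0" "subdegree f < m" by auto
    then show False using a nth_subdegree_nonzero[of f] by blast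
  qed
qed

lemma X_dvd_iff: "fps_X dvd (f::complex fps) \<longleftrightarrow> f $ 0 = 0"
  using Xpow_dvd_iff'[of 1 f] by simp

lemma lin_dvd_sub: "[:- x0, 1:] dvd ((a::complex poly) - [:poly a x0:])"
  by (rule iffD1[OF poly_eq_0_iff_dvd]) simp

locale hcurve =
  fixes g :: nat and h :: "complex poly"
  assumes deg_h: "degree h = 2 * g + 1" and sqf: "\<And>x0. order x0 h \<le> 1"
begin

lemma h_nz: "h \<noteq> 0" using deg_h by auto

lemma cq_deg: "degree (curve_eq h) = 2" by (simp add: curve_eq_def)
lemma cq_lc: "coeff (curve_eq h) 2 = 1" by (simp add: curve_eq_def numeral_2_eq_2)
lemma cq_nz: "curve_eq h \<noteq> 0" by (simp add: curve_eq_def)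

lemma I_C_eq: "I_C h = {r * curve_eq h |r. True}"
  by (simp add: I_C_def gen_ideal_singleton)

lemma is_id_IC: "is_id (I_C h)" by (simp add: I_C_def is_id_gen)

lemma cq_IC: "curve_eq h \<in> I_C h" by (simp add: I_C_def gen_ideal.gen)

definition red :: "bpoly \<Rightarrow> bpoly" where "red F = pseudo_mod F (curve_eq h)"

lemma red_props: "F - red F \<in> I_C h" "degree (red F) \<le> 1"
proof -
  obtain q r where qr: "pseudo_divmod F (curve_eq h) = (q, r)" by (metis prod.exhaust)
  have rr: "red F = r" using qr by (simp add: red_def pseudo_mod_def)
  from pseudo_divmod[OF cq_nz qr] have
    "smult (coeff (curve_eq h) (degree (curve_eq h)) ^ (Suc (degree F) - degree (curve_eq h))) F = curve_eq h * q + r"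
    "r = 0 \<or> degree r < degree (curve_eq h)" by blast+
  then have e: "F = curve_eq h * q + r" and d: "r = 0 \<or> degree r < 2"
    by (simp_all add: cq_deg cq_lc)
  show "F - red F \<in> I_C h" using e rr by (auto simp: I_C_eq mult.commute)
  show "degree (red F) \<le> 1" using d rr by auto
qed

lemma small_IC: assumes "degree A \<le> 1" "A \<in> I_C h" shows "A = 0"
proof -
  obtain r where "A = r * curve_eq h" using assms(2) by (auto simp: I_C_eq)
  moreover have "r \<noteq> 0 \<Longrightarrow> degree (r * curve_eq h) \<ge> 2"
    using cq_nz by (simp add: degree_mult_eq cq_deg)
  ultimately show ?thesis using assms(1) by fastforce
qed

lemma IC_iff_red: "F \<in> I_C h \<longleftrightarrow> red F = 0"
proof
  assume "F \<in> I_C h"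
  then have "F - (F - red F) \<in> I_C h" using red_props(1) is_id_diff[OF is_id_IC] by blast
  then show "red F = 0" using small_IC red_props(2) by simp
next
  assume "red F = 0" then show "F \<in> I_C h" using red_props(1)[of F] by simp
qed

lemma deg1_form: "degree (F::'a::zero poly) \<le> 1 \<Longrightarrow> F = [:coeff F 0, coeff F 1:]"
  by (rule poly_eqI) (auto simp: coeff_pCons split: nat.splits intro!: coeff_eq_0)

lemma red_small: "degree F \<le> 1 \<Longrightarrow> red F = F"
proof -
  assume d: "degree F \<le> 1"
  have "F - red F \<in> I_C h" by (rule red_props)
  moreover have "degree (F - red F) \<le> 1" using d red_props(2)[of F]
    by (meson degree_diff_le)
  ultimately show ?thesis using small_IC by fastforce
qed

definition Kp :: "complex \<Rightarrow> complex poly" where "Kp x0 = h div [:- x0, 1:]"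

lemma Kp_fact: "poly h x0 = 0 \<Longrightarrow> h = [:- x0, 1:] * Kp x0"
  unfolding Kp_def by (metis dvd_mult_div_cancel poly_eq_0_iff_dvd)

lemma Kp_nz: assumes "poly h x0 = 0" shows "poly (Kp x0) x0 \<noteq> 0"
proof
  assume "poly (Kp x0) x0 = 0"
  then obtain k where k: "Kp x0 = [:- x0, 1:] * k" by (metis dvdE poly_eq_0_iff_dvd)
  have "h = [:- x0, 1:] ^ 2 * k"
    by (subst Kp_fact[OF assms], subst k) (simp only: power2_eq_square mult.assoc)
  then have "[:- x0, 1:] ^ 2 dvd h" by (metis dvd_triv_left)
  then have "order x0 h \<ge> 2" using h_nz by (simp add: order_divides)
  then show False using sqf[of x0] by simp
qed

definition xi :: "point \<Rightarrow> complex poly" where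
  "xi P = (if snd P = 0 then [:fst P, 0, 1:] else [:fst P, 1:])"

definition Rb :: "complex \<Rightarrow> complex fps" where
  "Rb x0 = fps_radical (\<lambda>_ _. csqrt (poly (Kp x0) x0)) 2 (fps_of_poly (pcompose (Kp x0) [:x0, 0, 1:]))"

definition Yf :: "point \<Rightarrow> complex fps" where
  "Yf P = (if snd P = 0 then fps_X * Rb (fst P)
           else fps_radical (\<lambda>_ _. snd P) 2 (fps_of_poly (pcompose h [:fst P, 1:])))"

lemma Rb_sq: assumes "poly h x0 = 0"
  shows "Rb x0 ^ 2 = fps_of_poly (pcompose (Kp x0) [:x0, 0, 1:])" "Rb x0 $ 0 \<noteq> 0"
proof -
  let ?a = "fps_of_poly (pcompose (Kp x0) [:x0, 0, 1:])"
  have a0: "?a $ 0 = poly (Kp x0) x0" by simp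
  have cs: "csqrt (poly (Kp x0) x0) * csqrt (poly (Kp x0) x0) = poly (Kp x0) x0"
    by (metis power2_csqrt power2_eq_square)
  have "?a $ 0 \<noteq> 0" using a0 Kp_nz[OF assms] by simp
  from power_radical[OF this, of "\<lambda>_ _. csqrt (poly (Kp x0) x0)" 1]
  show "Rb x0 ^ 2 = ?a" by (simp add: Rb_def a0 numeral_2_eq_2 cs)
  show "Rb x0 $ 0 \<noteq> 0" using Kp_nz[OF assms] by (simp add: Rb_def)
qed

lemma xi0: "coeff (xi P) 0 = fst P" by (simp add: xi_def)
lemma xi_deg: "degree (xi P) > 0" by (simp add: xi_def)

lemma Yf0: "Yf P $ 0 = snd P" by (simp add: Yf_def)

lemma Yf_sq: assumes "on_curve h P" shows "Yf P ^ 2 = fps_of_poly (pcompose h (xi P))"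
proof (cases "snd P = 0")
  case True
  then have h0: "poly h (fst P) = 0" using assms by (simp add: on_curve_def)
  have e: "h = [:- fst P, 1:] * Kp (fst P)" by (rule Kp_fact[OF h0])
  have "pcompose h (xi P) = pcompose [:- fst P, 1:] [:fst P, 0, 1:] * pcompose (Kp (fst P)) [:fst P, 0, 1:]"
  proof -
    have "xi P = [:fst P, 0, 1:]" using True by (simp add: xi_def)
    then have "pcompose h (xi P) = pcompose ([:- fst P, 1:] * Kp (fst P)) [:fst P, 0, 1:]"
      by (simp only: e[symmetric])
    then show ?thesis by (simp only: pcompose_mult)
  qed
  also have "pcompose [:- fst P, 1:] [:fst P, 0, 1:] = [:0, 0, 1:]"
    by (simp add: pcompose_pCons)
  finally have "fps_of_poly (pcompose h (xi P)) = fps_X ^ 2 * Rb (fst P) ^ 2"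
    using Rb_sq[OF h0] by (simp add: fps_of_poly_mult fps_of_poly_pCons power2_eq_square)
  then show ?thesis using True by (simp add: Yf_def power_mult_distrib)
next
  case False
  let ?a = "fps_of_poly (pcompose h [:fst P, 1:])"
  have a0: "?a $ 0 = poly h (fst P)" by simp
  also have "\<dots> = snd P ^ 2" using assms by (simp add: on_curve_def)
  finally have a0': "?a $ 0 = snd P ^ 2" .
  then have "?a $ 0 \<noteq> 0" using False by simp
  from power_radical[OF this, of "\<lambda>_ _. snd P" 1]
  show ?thesis using False a0' by (simp add: Yf_def xi_def numeral_2_eq_2)
qed

end


definition cb :: "complex \<Rightarrow> bpoly" where "cb c = [:[:c:]:]"

lemma cb_add: "cb (a + b) = cb a + cb b" by (simp add: cb_def)
lemma cb_mult: "cb (a * b) = cb a * cb b" by (simp add: cb_def)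
lemma cb_0[simp]: "cb 0 = 0" by (simp add: cb_def)
lemma cb_1[simp]: "cb 1 = 1" by (simp add: cb_def one_pCons)

context hcurve
begin

definition phi :: "point \<Rightarrow> complex poly \<Rightarrow> complex fps" where
  "phi P c = fps_of_poly (pcompose c (xi P))"

definition ev :: "point \<Rightarrow> bpoly \<Rightarrow> complex fps" where
  "ev P F = poly (map_poly (phi P) F) (Yf P)"

lemma phi_0[simp]: "phi P 0 = 0" by (simp add: phi_def)
lemma phi_add: "phi P (a + b) = phi P a + phi P b" by (simp add: phi_def pcompose_add fps_of_poly_add)
lemma phi_mult: "phi P (a * b) = phi P a * phi P b" by (simp add: phi_def pcompose_mult fps_of_poly_mult)
lemma phi_const[simp]: "phi P [:c:] = fps_const c" by (simp add: phi_def fps_of_poly_const)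
lemma phi_1[simp]: "phi P 1 = 1" by (simp add: phi_def one_pCons)
lemma phi_uminus: "phi P (- a) = - phi P a" by (simp add: phi_def pcompose_uminus fps_of_poly_uminus)

lemma ev_pCons: "ev P (pCons a F) = phi P a + Yf P * ev P F"
  by (simp add: ev_def map_poly_pCons)

lemma ev_0[simp]: "ev P 0 = 0" by (simp add: ev_def)

lemma ev_add: "ev P (F + G) = ev P F + ev P G"
proof (induction F arbitrary: G)
  case 0 then show ?case by simp
next
  case (pCons a F)
  show ?case
  proof (cases G rule: pCons_cases)
    case (pCons b G')
    have ih: "ev P (F + G') = ev P F + ev P G'" by (rule pCons.IH)
    show ?thesis unfolding pCons by (simp add: ev_pCons phi_add ih algebra_simps)
  qed
qed

lemma ev_smult: "ev P (smult a F) = phi P a * ev P F"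
  by (induction F) (simp_all add: ev_pCons phi_mult algebra_simps)

lemma ev_mult: "ev P (F * G) = ev P F * ev P G"
proof (induction F)
  case 0 then show ?case by simp
next
  case (pCons a F)
  have "ev P (pCons a F * G) = ev P (smult a G) + ev P (pCons 0 (F * G))"
    by (simp add: ev_add)
  then show ?case using pCons.IH by (simp add: ev_smult ev_pCons algebra_simps)
qed

lemma ev_const: "ev P [:c:] = phi P c" by (simp add: ev_pCons)

lemma ev_uminus: "ev P (- F) = - ev P F"
  using ev_add[of P "-F" F] by (simp add: eq_neg_iff_add_eq_0)

lemma ev_diff: "ev P (F - G) = ev P F - ev P G"
  using ev_add[of P F "-G"] by (simp add: ev_uminus)

lemma ev_1[simp]: "ev P 1 = 1" by (simp add: one_pCons ev_const)

lemma ev_power: "ev P (F ^ n) = ev P F ^ n"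
  by (induction n) (simp_all add: ev_mult)

lemma ev_cb[simp]: "ev P (cb c) = fps_const c" by (simp add: cb_def ev_const)

lemma ev_X: "ev P X_var = fps_of_poly (xi P)"
  by (simp add: X_var_def ev_const phi_def pcompose_pCons)

lemma ev_Y: "ev P Y_var = Yf P"
  by (simp add: Y_var_def ev_pCons)

lemma ev_lin: "ev P [:p, q:] = phi P p + Yf P * phi P q"
  by (simp add: ev_pCons)

lemma ev_cq: "on_curve h P \<Longrightarrow> ev P (curve_eq h) = 0"
proof -
  assume P: "on_curve h P"
  have "phi P h = Yf P * Yf P" using Yf_sq[OF P] by (simp add: phi_def power2_eq_square)
  then show ?thesis by (simp add: curve_eq_def ev_pCons phi_uminus)
qed

lemma ev_IC: "on_curve h P \<Longrightarrow> F \<in> I_C h \<Longrightarrow> ev P F = 0"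
  by (auto simp: I_C_eq ev_mult ev_cq)

lemma norm_zero: assumes "p * p = h * (q * q)" shows "p = 0 \<and> q = 0"
proof (cases "q = 0")
  case True then show ?thesis using assms by simp
next
  case False
  then have "p \<noteq> 0" using assms h_nz by auto
  then have "even (degree (p * p))" by (simp add: degree_mult_eq)
  moreover have "odd (degree (h * (q * q)))" using False h_nz deg_h by (simp add: degree_mult_eq)
  ultimately show ?thesis using assms by simp
qed

lemma ev_red: "on_curve h P \<Longrightarrow> ev P F = ev P (red F)"
  using ev_IC[OF _ red_props(1), of P F] by (simp add: ev_diff)

lemma ev_zero_iff: assumes P: "on_curve h P" shows "ev P F = 0 \<longleftrightarrow> F \<in> I_C h"
proof
  assume e: "ev P F = 0"
  define p where "p = coeff (red F) 0"
  define q where "q = coeff (red F) 1"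
  have R: "red F = [:p, q:]" unfolding p_def q_def by (rule deg1_form[OF red_props(2)])
  have "phi P p + Yf P * phi P q = 0" using e ev_red[OF P, of F] R ev_lin by simp
  then have "phi P p * phi P p = (Yf P * Yf P) * (phi P q * phi P q)"
  proof -
    have "phi P p = - (Yf P * phi P q)" using \<open>phi P p + Yf P * phi P q = 0\<close> by (simp add: eq_neg_iff_add_eq_0)
    then show ?thesis by (simp add: algebra_simps)
  qed
  also have "Yf P * Yf P = phi P h" using Yf_sq[OF P] by (simp add: phi_def power2_eq_square)
  finally have e2: "phi P p * phi P p = phi P h * (phi P q * phi P q)" .
  have "phi P (p * p - h * (q * q)) = phi P p * phi P p - phi P h * (phi P q * phi P q)"
    unfolding phi_def by (simp only: pcompose_diff pcompose_mult fps_of_poly_diff fps_of_poly_mult)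
  then have "phi P (p * p - h * (q * q)) = 0" using e2 by simp
  then have "fps_of_poly (pcompose (p * p - h * (q * q)) (xi P)) = fps_of_poly 0" by (simp add: phi_def)
  then have "pcompose (p * p - h * (q * q)) (xi P) = 0" by (simp only: fps_of_poly_eq_iff)
  then have "p * p - h * (q * q) = 0" using pcompose_eq_0 xi_deg by blast
  then have "p = 0 \<and> q = 0" using norm_zero[of p q] by (simp only: right_minus_eq)
  then show "F \<in> I_C h" using R IC_iff_red by simp
qed (rule ev_IC[OF P])

end


lemma const_add: "[:(a::'a::comm_ring_1) + b:] = [:a:] + [:b:]" by simp
lemma const_mult: "[:(a::'a::comm_ring_1) * b:] = [:a:] * [:b:]" by simp
lemma const_diff: "[:(a::'a::comm_ring_1) - b:] = [:a:] - [:b:]" by simp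

context hcurve
begin

definition M :: "point \<Rightarrow> nat \<Rightarrow> bpoly set" where "M P m = Mid (I_pt h P) (I_C h) m"

lemma is_id_mP: "is_id (I_pt h P)" by (simp add: I_pt_def is_id_gen)
lemma is_id_M: "is_id (M P m)" by (simp add: M_def is_id_Mid)
lemma IC_M: "F \<in> I_C h \<Longrightarrow> F \<in> M P m" by (simp add: M_def Mid_C)
lemma pow_M: "F \<in> ideal_pow (I_pt h P) m \<Longrightarrow> F \<in> M P m" by (simp add: M_def Mid_pow)
lemma M_mult: "x \<in> M P a \<Longrightarrow> y \<in> M P b \<Longrightarrow> x * y \<in> M P (a + b)"
  unfolding M_def by (rule Mid_mult[OF is_id_mP is_id_IC])
lemma mP_M1: "x \<in> I_pt h P \<Longrightarrow> x \<in> M P 1"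
proof -
  assume x: "x \<in> I_pt h P"
  have "x \<in> ideal_pow (I_pt h P) (Suc 0)" by (rule ideal_pow_1[OF is_id_mP x])
  then show ?thesis by (simp only: One_nat_def[symmetric]) (rule pow_M)
qed
lemma M_anti: "m \<le> n \<Longrightarrow> M P n \<subseteq> M P m"
  unfolding M_def by (rule Mid_antimono[OF is_id_mP])
lemma M_0: "M P 0 = UNIV" by (simp add: M_def Mid_0)

lemma gen_X: "X_var - cb (fst P) \<in> I_pt h P"
  by (simp add: I_pt_def cb_def gen_ideal.gen)
lemma gen_Y: "Y_var - cb (snd P) \<in> I_pt h P"
  by (simp add: I_pt_def cb_def gen_ideal.gen)
lemma gen_C: "curve_eq h \<in> I_pt h P"
  by (simp add: I_pt_def gen_ideal.gen)

lemma ev_mP: assumes P: "on_curve h P" and F: "F \<in> I_pt h P" shows "fps_X dvd ev P F"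
proof -
  have "is_id {F. fps_X dvd ev P F}"
    by (rule is_idI) (auto simp: ev_add ev_mult)
  moreover have "fps_X dvd ev P (X_var - cb (fst P))"
    by (simp add: X_dvd_iff ev_diff ev_X xi0)
  moreover have "fps_X dvd ev P (Y_var - cb (snd P))"
    by (simp add: X_dvd_iff ev_diff ev_Y Yf0)
  moreover have "fps_X dvd ev P (curve_eq h)" by (simp add: ev_cq[OF P])
  ultimately have "F \<in> {F. fps_X dvd ev P F}" using F unfolding I_pt_def
    by (intro gen_ideal_induct_id[of F _ "{F. fps_X dvd ev P F}"]) (auto simp: cb_def)
  then show ?thesis by simp
qed

lemma ev_pow: assumes P: "on_curve h P"
  shows "F \<in> ideal_pow (I_pt h P) m \<Longrightarrow> fps_X ^ m dvd ev P F"
proof (induction m arbitrary: F)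
  case 0 then show ?case by simp
next
  case (Suc m)
  have "is_id {F. fps_X ^ Suc m dvd ev P F}"
    by (rule is_idI) (auto simp: ev_add ev_mult)
  moreover have "i * w \<in> {F. fps_X ^ Suc m dvd ev P F}" if "i \<in> I_pt h P" "w \<in> ideal_pow (I_pt h P) m" for i w
    using ev_mP[OF P that(1)] Suc.IH[OF that(2)] by (simp add: ev_mult mult_dvd_mono)
  ultimately have "ideal_prod (I_pt h P) (ideal_pow (I_pt h P) m) \<subseteq> {F. fps_X ^ Suc m dvd ev P F}"
    by (intro ideal_prod_least) auto
  then show ?case using Suc.prems by auto
qed

lemma ev_M: assumes P: "on_curve h P" and F: "F \<in> M P m" shows "fps_X ^ m dvd ev P F"
proof -
  have "is_id {F. fps_X ^ m dvd ev P F}"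
    by (rule is_idI) (auto simp: ev_add ev_mult)
  moreover have "s \<in> {F. fps_X ^ m dvd ev P F}" if "s \<in> ideal_pow (I_pt h P) m \<union> I_C h" for s
    using that ev_pow[OF P] ev_IC[OF P] by auto
  ultimately show ?thesis using F unfolding M_def Mid_def
    using gen_ideal_induct_id[of F _ "{F. fps_X ^ m dvd ev P F}"] by blast
qed

definition ell :: "point \<Rightarrow> bpoly" where
  "ell P = (if snd P = 0 then Y_var else X_var - cb (fst P))"

lemma ell_mP: "ell P \<in> I_pt h P"
  using gen_X[of P] gen_Y[of P] by (auto simp: ell_def)

lemma ell_pow: "ell P ^ k \<in> ideal_pow (I_pt h P) k"
  by (induction k) (simp_all add: ideal_prod_mem ell_mP)

lemma ev_ell: assumes P: "on_curve h P" shows "\<exists>U. ev P (ell P) = fps_X * U \<and> U $ 0 \<noteq> 0"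
proof (cases "snd P = 0")
  case True
  then have "poly h (fst P) = 0" using P by (simp add: on_curve_def)
  then show ?thesis using True Rb_sq(2) by (auto simp: ell_def ev_Y Yf_def)
next
  case False
  then show ?thesis
    by (intro exI[of _ 1]) (simp add: ell_def ev_diff ev_X xi_def fps_of_poly_linear)
qed

lemma Y_pCons: "pCons a r = [:a:] + Y_var * r"
  by (simp add: Y_var_def)

lemma Xm_eq: "X_var - cb x0 = [:[:- x0, 1:]:]"
  by (simp add: X_var_def cb_def)

lemma pt_lemma: "\<exists>c. r - cb c \<in> I_pt h P"
proof (induction r)
  case 0 show ?case by (intro exI[of _ 0]) (simp add: is_id_0[OF is_id_mP])
next
  case (pCons a r)
  then obtain c' where c': "r - cb c' \<in> I_pt h P" by blast
  obtain k where k: "a - [:poly a (fst P):] = [:- fst P, 1:] * k"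
    using lin_dvd_sub by (metis dvdE)
  have e1: "[:a:] - cb (poly a (fst P)) = [:k:] * (X_var - cb (fst P))"
    unfolding Xm_eq unfolding cb_def by (simp only: const_diff[symmetric] k const_mult[symmetric] mult.commute)
  have "pCons a r - cb (poly a (fst P) + snd P * c') =
      ([:a:] - cb (poly a (fst P))) + Y_var * (r - cb c') + cb c' * (Y_var - cb (snd P))"
    by (subst Y_pCons) (simp add: cb_add cb_mult algebra_simps)
  also have "\<dots> \<in> I_pt h P"
    using is_id_mP c' gen_X gen_Y unfolding e1
    by (intro is_id_add is_id_mult) auto
  finally show ?case by blast
qed

lemma T_id: assumes P: "on_curve h P"
  shows "is_id {F. \<exists>c. F - cb c * ell P ^ k \<in> M P (Suc k)}"
proof (rule is_idI)
  show "0 \<in> {F. \<exists>c. F - cb c * ell P ^ k \<in> M P (Suc k)}"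
    by (auto intro!: exI[of _ 0] is_id_0[OF is_id_M])
next
  fix a b assume "a \<in> {F. \<exists>c. F - cb c * ell P ^ k \<in> M P (Suc k)}" "b \<in> {F. \<exists>c. F - cb c * ell P ^ k \<in> M P (Suc k)}"
  then obtain c1 c2 where "a - cb c1 * ell P ^ k \<in> M P (Suc k)" "b - cb c2 * ell P ^ k \<in> M P (Suc k)" by blast
  then have "(a - cb c1 * ell P ^ k) + (b - cb c2 * ell P ^ k) \<in> M P (Suc k)" by (rule is_id_add[OF is_id_M])
  moreover have eq: "a + b - cb (c1 + c2) * ell P ^ k = (a - cb c1 * ell P ^ k) + (b - cb c2 * ell P ^ k)"
    by (simp add: cb_add algebra_simps)
  ultimately have "a + b - cb (c1 + c2) * ell P ^ k \<in> M P (Suc k)" by (simp only: eq)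
  then show "a + b \<in> {F. \<exists>c. F - cb c * ell P ^ k \<in> M P (Suc k)}" by blast
next
  fix r a assume "a \<in> {F. \<exists>c. F - cb c * ell P ^ k \<in> M P (Suc k)}"
  then obtain c where c: "a - cb c * ell P ^ k \<in> M P (Suc k)" by blast
  obtain c' where c': "r - cb c' \<in> I_pt h P" using pt_lemma by blast
  have "(r - cb c') * (cb c * ell P ^ k) \<in> M P (1 + k)"
    by (rule M_mult[OF mP_M1[OF c']]) (rule pow_M, rule is_id_mult[OF is_id_ideal_pow ell_pow])
  moreover have "r * (a - cb c * ell P ^ k) \<in> M P (Suc k)" by (rule is_id_mult[OF is_id_M c])
  ultimately have "r * (a - cb c * ell P ^ k) + (r - cb c') * (cb c * ell P ^ k) \<in> M P (Suc k)"
    by (intro is_id_add[OF is_id_M]) auto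
  moreover have eq: "r * a - cb (c' * c) * ell P ^ k = r * (a - cb c * ell P ^ k) + (r - cb c') * (cb c * ell P ^ k)"
    by (simp add: cb_mult algebra_simps)
  ultimately have "r * a - cb (c' * c) * ell P ^ k \<in> M P (Suc k)" by (simp only: eq)
  then show "r * a \<in> {F. \<exists>c. F - cb c * ell P ^ k \<in> M P (Suc k)}" by blast
qed

end


context hcurve
begin

lemma cq_eq: "curve_eq h = Y_var * Y_var - [:h:]"
  by (simp add: curve_eq_def Y_var_def)

lemma Xm_const: "[:[:- x0, 1:] * k:] = (X_var - cb x0) * [:k:]"
  by (simp add: Xm_eq)

lemma M2_prod: "a \<in> I_pt h P \<Longrightarrow> b \<in> I_pt h P \<Longrightarrow> a * b \<in> M P 2"
  using M_mult[OF mP_M1 mP_M1, of a P b] by (simp add: numeral_2_eq_2)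

lemma gen_Y_M2:
  assumes P: "on_curve h P" and y0: "snd P \<noteq> 0"
  shows "\<exists>c. (Y_var - cb (snd P)) - cb c * ell P \<in> M P 2"
proof -
  define x0 where "x0 = fst P"
  define y0 where "y0 = snd P"
  have hx0: "poly h x0 = y0 * y0" using P by (simp add: on_curve_def x0_def y0_def power2_eq_square)
  obtain k where k: "h - [:poly h x0:] = [:- x0, 1:] * k" using lin_dvd_sub by (metis dvdE)
  obtain k2 where k2: "k - [:poly k x0:] = [:- x0, 1:] * k2" using lin_dvd_sub by (metis dvdE)
  define Xm where "Xm = X_var - cb x0"
  define Ym where "Ym = Y_var - cb y0"
  have hk: "[:h:] = cb (y0 * y0) + Xm * [:k:]"
  proof -
    have "h = [:poly h x0:] + [:- x0, 1:] * k" using k by (simp add: algebra_simps)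
    then have "[:h:] = [:[:poly h x0:]:] + [:[:- x0, 1:] * k:]" by (metis const_add)
    then show ?thesis by (simp only: Xm_const Xm_def hx0 cb_def)
  qed
  have kk: "[:k:] = cb (poly k x0) + Xm * [:k2:]"
  proof -
    have "k = [:poly k x0:] + [:- x0, 1:] * k2" using k2 by (simp add: algebra_simps)
    then have "[:k:] = [:[:poly k x0:]:] + [:[:- x0, 1:] * k2:]" by (metis const_add)
    then show ?thesis by (simp only: Xm_const Xm_def cb_def)
  qed
  have y2: "cb (2 * y0) * cb (1 / (2 * y0)) = 1" using y0 by (simp add: cb_mult[symmetric] y0_def)
  have key: "cb (2 * y0) * (Ym - cb (poly k x0 / (2 * y0)) * Xm) = curve_eq h + Xm * Xm * [:k2:] - Ym * Ym"
  proof -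
    have "cb (2 * y0) * cb (poly k x0 / (2 * y0)) = cb (poly k x0)"
      using y0 by (simp add: cb_mult[symmetric] y0_def)
    moreover have "cb (2 * y0) = cb y0 + cb y0" by (simp add: cb_add[symmetric])
    moreover have "cb (y0 * y0) = cb y0 * cb y0" by (simp add: cb_mult)
    ultimately show ?thesis unfolding cq_eq hk kk Ym_def
      by (simp add: algebra_simps)
  qed
  have "Ym - cb (poly k x0 / (2 * y0)) * Xm = cb (1 / (2 * y0)) * (curve_eq h + Xm * Xm * [:k2:] - Ym * Ym)"
    unfolding key[symmetric] using y2 by (simp add: mult.assoc[symmetric] mult.commute)
  also have "\<dots> \<in> M P 2"
  proof -
    have "Xm \<in> I_pt h P" "Ym \<in> I_pt h P" using gen_X gen_Y by (simp_all add: Xm_def Ym_def x0_def y0_def)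
    then have "Xm * Xm * [:k2:] \<in> M P 2" "Ym * Ym \<in> M P 2"
      using M2_prod is_id_mult2[OF is_id_M] by blast+
    then have "curve_eq h + Xm * Xm * [:k2:] - Ym * Ym \<in> M P 2"
      using IC_M[OF cq_IC] is_id_add[OF is_id_M] is_id_diff[OF is_id_M] by blast
    then show ?thesis by (rule is_id_mult[OF is_id_M])
  qed
  finally show ?thesis using y0 by (auto simp: ell_def Xm_def Ym_def x0_def y0_def)
qed

lemma gen_X_M2:
  assumes P: "on_curve h P" and y0: "snd P = 0"
  shows "X_var - cb (fst P) \<in> M P 2"
proof -
  define x0 where "x0 = fst P"
  have h0: "poly h x0 = 0" using P y0 by (simp add: on_curve_def x0_def)
  define K where "K = Kp x0"
  have hK: "h = [:- x0, 1:] * K" using Kp_fact[OF h0] by (simp add: K_def)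
  have K0: "poly K x0 \<noteq> 0" using Kp_nz[OF h0] by (simp add: K_def)
  obtain k2 where k2: "K - [:poly K x0:] = [:- x0, 1:] * k2" using lin_dvd_sub by (metis dvdE)
  define Xm where "Xm = X_var - cb x0"
  have hk: "[:h:] = Xm * [:K:]" by (simp only: hK Xm_const Xm_def)
  have kk: "[:K:] = cb (poly K x0) + Xm * [:k2:]"
  proof -
    have "K = [:poly K x0:] + [:- x0, 1:] * k2" using k2 by (simp add: algebra_simps)
    then have "[:K:] = [:[:poly K x0:]:] + [:[:- x0, 1:] * k2:]" by (metis const_add)
    then show ?thesis by (simp only: Xm_const Xm_def cb_def)
  qed
  have key: "cb (poly K x0) * Xm = Y_var * Y_var - curve_eq h - Xm * Xm * [:k2:]"
    unfolding cq_eq hk kk by (simp add: algebra_simps)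
  have inv: "cb (1 / poly K x0) * cb (poly K x0) = 1" using K0 by (simp add: cb_mult[symmetric])
  have "Xm = cb (1 / poly K x0) * (Y_var * Y_var - curve_eq h - Xm * Xm * [:k2:])"
    unfolding key[symmetric] by (simp add: mult.assoc[symmetric] inv)
  also have "\<dots> \<in> M P 2"
  proof -
    have "Xm \<in> I_pt h P" using gen_X by (simp add: Xm_def x0_def)
    moreover have "Y_var \<in> I_pt h P" using gen_Y[of P] y0 by simp
    ultimately have "Xm * Xm * [:k2:] \<in> M P 2" "Y_var * Y_var \<in> M P 2"
      using M2_prod is_id_mult2[OF is_id_M] by blast+
    then have "Y_var * Y_var - curve_eq h - Xm * Xm * [:k2:] \<in> M P 2"
      using IC_M[OF cq_IC] is_id_diff[OF is_id_M] by blast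
    then show ?thesis by (rule is_id_mult[OF is_id_M])
  qed
  finally show ?thesis by (simp add: Xm_def x0_def)
qed

lemma ellM2: assumes P: "on_curve h P" and i: "i \<in> I_pt h P"
  shows "\<exists>c. i - cb c * ell P \<in> M P 2"
proof -
  have T: "is_id {F. \<exists>c. F - cb c * ell P \<in> M P 2}" using T_id[OF P, of 1] by (simp add: numeral_2_eq_2)
  have "i \<in> {F. \<exists>c. F - cb c * ell P \<in> M P 2}"
    using i unfolding I_pt_def
  proof (rule gen_ideal_induct_id[OF _ T])
    fix s assume s: "s \<in> {X_var - [:[:fst P:]:], Y_var - [:[:snd P:]:], curve_eq h}"
    then have s': "s = X_var - cb (fst P) \<or> s = Y_var - cb (snd P) \<or> s = curve_eq h" by (auto simp: cb_def)
    have z: "0 \<in> M P 2" by (rule is_id_0[OF is_id_M])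
    have C: "curve_eq h - cb 0 * ell P \<in> M P 2" by (simp add: IC_M cq_IC)
    show "s \<in> {F. \<exists>c. F - cb c * ell P \<in> M P 2}"
    proof (cases "snd P = 0")
      case True
      have "X_var - cb (fst P) - cb 0 * ell P \<in> M P 2" using gen_X_M2[OF P True] by simp
      moreover have "Y_var - cb (snd P) - cb 1 * ell P \<in> M P 2" using True z by (simp add: ell_def)
      ultimately show ?thesis using s' C by blast
    next
      case False
      have "X_var - cb (fst P) - cb 1 * ell P \<in> M P 2" using False z by (simp add: ell_def)
      moreover obtain c where "Y_var - cb (snd P) - cb c * ell P \<in> M P 2" using gen_Y_M2[OF P False] by blast
      ultimately show ?thesis using s' C by blast
    qed
  qed
  then show ?thesis by simp
qed

end


lemma pcompose_power_left: "pcompose (p ^ n) q = (pcompose p q) ^ (n::nat)"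
  by (induction n) (simp_all add: pcompose_mult one_pCons)

context hcurve
begin

lemma M_gen: "M P m = gen_ideal (ideal_pow (I_pt h P) m \<union> I_C h)"
  by (simp add: M_def Mid_def)

lemma TB: assumes P: "on_curve h P"
  shows "F \<in> ideal_pow (I_pt h P) m \<Longrightarrow> \<exists>c. F - cb c * ell P ^ m \<in> M P (Suc m)"
proof (induction m arbitrary: F)
  case 0
  obtain c where "F - cb c \<in> I_pt h P" using pt_lemma by blast
  then have "F - cb c \<in> M P 1" by (rule mP_M1)
  then show ?case by auto
next
  case (Suc m)
  have T: "is_id {F. \<exists>c. F - cb c * ell P ^ Suc m \<in> M P (Suc (Suc m))}" by (rule T_id[OF P])
  have "ideal_prod (I_pt h P) (ideal_pow (I_pt h P) m) \<subseteq> {F. \<exists>c. F - cb c * ell P ^ Suc m \<in> M P (Suc (Suc m))}"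
  proof (rule ideal_prod_least[OF _ T])
    fix i w assume i: "i \<in> I_pt h P" and w: "w \<in> ideal_pow (I_pt h P) m"
    obtain c1 where c1: "i - cb c1 * ell P \<in> M P 2" using ellM2[OF P i] by blast
    obtain c2 where c2: "w - cb c2 * ell P ^ m \<in> M P (Suc m)" using Suc.IH[OF w] by blast
    have a1: "(i - cb c1 * ell P) * w \<in> M P (2 + m)" by (rule M_mult[OF c1 pow_M[OF w]])
    have "cb c1 * ell P \<in> M P 1" by (rule is_id_mult[OF is_id_M mP_M1[OF ell_mP]])
    then have a2: "(cb c1 * ell P) * (w - cb c2 * ell P ^ m) \<in> M P (1 + Suc m)" by (rule M_mult[OF _ c2])
    have "(i - cb c1 * ell P) * w + (cb c1 * ell P) * (w - cb c2 * ell P ^ m) \<in> M P (Suc (Suc m))"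
      using a1 a2 is_id_add[OF is_id_M] by simp
    moreover have eq: "i * w - cb (c1 * c2) * ell P ^ Suc m = (i - cb c1 * ell P) * w + (cb c1 * ell P) * (w - cb c2 * ell P ^ m)"
      by (simp add: cb_mult algebra_simps)
    ultimately have "i * w - cb (c1 * c2) * ell P ^ Suc m \<in> M P (Suc (Suc m))" by (simp only: eq)
    then show "i * w \<in> {F. \<exists>c. F - cb c * ell P ^ Suc m \<in> M P (Suc (Suc m))}" by blast
  qed
  then show ?case using Suc.prems by auto
qed

lemma TA: assumes P: "on_curve h P" and F: "F \<in> M P m"
  shows "\<exists>c. F - cb c * ell P ^ m \<in> M P (Suc m)"
proof -
  have "F \<in> {F. \<exists>c. F - cb c * ell P ^ m \<in> M P (Suc m)}"
    using F unfolding M_gen[of P m]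
  proof (rule gen_ideal_induct_id[OF _ T_id[OF P]])
    fix s assume "s \<in> ideal_pow (I_pt h P) m \<union> I_C h"
    then show "s \<in> {F. \<exists>c. F - cb c * ell P ^ m \<in> M P (Suc m)}"
    proof
      assume "s \<in> ideal_pow (I_pt h P) m" then show ?thesis using TB[OF P] by blast
    next
      assume "s \<in> I_C h" then show ?thesis by (intro CollectI exI[of _ 0]) (simp add: IC_M)
    qed
  qed
  then show ?thesis by simp
qed

lemma char: assumes P: "on_curve h P" shows "F \<in> M P m \<longleftrightarrow> fps_X ^ m dvd ev P F"
proof
  show "F \<in> M P m \<Longrightarrow> fps_X ^ m dvd ev P F" by (rule ev_M[OF P])
next
  show "fps_X ^ m dvd ev P F \<Longrightarrow> F \<in> M P m"
  proof (induction m)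
    case 0 then show ?case by (simp add: M_0)
  next
    case (Suc m)
    have "fps_X ^ m dvd (fps_X ^ Suc m :: complex fps)" by (simp add: le_imp_power_dvd)
    then have "F \<in> M P m" using Suc dvd_trans by blast
    then obtain c where c: "F - cb c * ell P ^ m \<in> M P (Suc m)" using TA[OF P] by blast
    obtain U where U: "ev P (ell P) = fps_X * U" "U $ 0 \<noteq> 0" using ev_ell[OF P] by blast
    have "fps_X ^ Suc m dvd ev P (F - cb c * ell P ^ m)" by (rule ev_M[OF P c])
    then have "fps_X ^ Suc m dvd ev P F - ev P (F - cb c * ell P ^ m)" by (rule dvd_diff[OF Suc.prems])
    also have "ev P F - ev P (F - cb c * ell P ^ m) = fps_X ^ m * (fps_const c * U ^ m)"
      by (simp add: ev_diff ev_mult ev_power U(1) power_mult_distrib algebra_simps)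
    finally have "(fps_X ^ m * (fps_const c * U ^ m)) $ m = 0"
      unfolding Xpow_dvd_iff' by simp
    then have "c * (U $ 0) ^ m = 0" by (simp add: fps_X_power_mult_nth fps_power_zeroth)
    then have "c = 0" using U(2) by simp
    then show ?case using c by simp
  qed
qed

definition v :: "point \<Rightarrow> bpoly \<Rightarrow> nat" where "v P F = subdegree (ev P F)"

lemma M_iff_v: assumes P: "on_curve h P" and F: "F \<notin> I_C h"
  shows "F \<in> M P m \<longleftrightarrow> m \<le> v P F"
  using ev_zero_iff[OF P, of F] F by (simp add: char[OF P] Xpow_dvd_iff v_def)

lemma ord_fin_v: assumes P: "on_curve h P" and F: "F \<notin> I_C h"
  shows "ord_fin h P F = v P F"
  unfolding ord_fin_def
proof (rule Greatest_equality)
  show "F \<in> gen_ideal (ideal_pow (I_pt h P) (v P F) \<union> I_C h)"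
    using M_iff_v[OF P F] by (simp add: M_def Mid_def)
  show "y \<le> v P F" if "F \<in> gen_ideal (ideal_pow (I_pt h P) y \<union> I_C h)" for y
    using that M_iff_v[OF P F] by (simp add: M_def Mid_def)
qed

lemma some_point: "on_curve h (0, csqrt (poly h 0))"
  by (simp add: on_curve_def)

lemma IC_mult: assumes "F \<notin> I_C h" "G \<notin> I_C h" shows "F * G \<notin> I_C h"
proof -
  let ?P = "(0, csqrt (poly h 0))"
  have "ev ?P F \<noteq> 0" "ev ?P G \<noteq> 0" using assms ev_zero_iff[OF some_point] by blast+
  then have "ev ?P (F * G) \<noteq> 0" by (simp add: ev_mult)
  then show ?thesis using ev_zero_iff[OF some_point] by blast
qed

lemma v_mult: assumes P: "on_curve h P" and "F \<notin> I_C h" "G \<notin> I_C h"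
  shows "v P (F * G) = v P F + v P G"
  using assms ev_zero_iff[OF P] by (simp add: v_def ev_mult)

lemma v_ge: assumes P: "on_curve h P" and "F \<notin> I_C h" "F \<in> M P m" shows "m \<le> v P F"
  using M_iff_v assms by blast

definition ee :: "point \<Rightarrow> nat" where "ee P = (if snd P = 0 then 2 else 1)"

lemma v_const: assumes P: "on_curve h P" and c: "c \<noteq> 0"
  shows "v P [:c:] = ee P * order (fst P) c"
proof -
  define x0 where "x0 = fst P"
  obtain q where q: "c = [:- x0, 1:] ^ order x0 c * q" "\<not> [:- x0, 1:] dvd q"
    using order_decomp[OF c] by blast
  have q0: "poly q x0 \<noteq> 0" using q(2) poly_eq_0_iff_dvd by blast
  have lin: "pcompose [:- x0, 1:] (xi P) = [:0, 1:] ^ ee P"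
    by (simp add: xi_def ee_def x0_def pcompose_pCons numeral_2_eq_2)
  have "pcompose c (xi P) = [:0, 1:] ^ (ee P * order x0 c) * pcompose q (xi P)"
    by (subst q(1)) (simp add: pcompose_mult pcompose_power_left lin power_mult mult.commute)
  moreover have "poly (pcompose q (xi P)) 0 \<noteq> 0"
    using q0 by (simp add: poly_pcompose xi_def x0_def)
  ultimately have "order 0 (pcompose c (xi P)) = ee P * order x0 c"
  proof -
    assume e: "pcompose c (xi P) = [:0, 1:] ^ (ee P * order x0 c) * pcompose q (xi P)"
      and n: "poly (pcompose q (xi P)) 0 \<noteq> 0"
    have qn: "pcompose q (xi P) \<noteq> 0" using n by auto
    have "order 0 (pcompose c (xi P)) = order 0 ([:0, 1:] ^ (ee P * order x0 c) :: complex poly) + order 0 (pcompose q (xi P))"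
      unfolding e by (rule Polynomial.order_mult) (use qn in simp)
    also have "order 0 ([:0, 1:] ^ (ee P * order x0 c) :: complex poly) = ee P * order x0 c"
      using order_power_n_n[of 0 "ee P * order x0 c"] by simp
    also have "order 0 (pcompose q (xi P)) = 0" using n by (simp add: order_0I)
    finally show ?thesis by simp
  qed
  moreover have "pcompose c (xi P) \<noteq> 0" using c pcompose_eq_0 xi_deg by blast
  ultimately show ?thesis
    by (simp add: v_def ev_const phi_def subdegree_fps_of_poly x0_def)
qed

end


lemma conj_add: "conj_bp (F + G) = conj_bp F + conj_bp G" by (simp add: conj_bp_def pcompose_add)
lemma conj_mult: "conj_bp (F * G) = conj_bp F * conj_bp G" by (simp add: conj_bp_def pcompose_mult)
lemma conj_uminus: "conj_bp (- F) = - conj_bp F" by (simp add: conj_bp_def pcompose_uminus)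
lemma conj_diff: "conj_bp (F - G) = conj_bp F - conj_bp G" by (simp add: conj_bp_def pcompose_diff)
lemma conj_const[simp]: "conj_bp [:c:] = [:c:]" by (simp add: conj_bp_def)
lemma conj_0[simp]: "conj_bp 0 = 0" by (simp add: conj_bp_def)
lemma conj_1[simp]: "conj_bp 1 = 1" by (simp add: conj_bp_def one_pCons)
lemma conj_cb[simp]: "conj_bp (cb c) = cb c" by (simp add: cb_def)
lemma conj_X[simp]: "conj_bp X_var = X_var" by (simp add: X_var_def)
lemma conj_Y[simp]: "conj_bp Y_var = - Y_var" by (simp add: Y_var_def conj_bp_def pcompose_pCons)
lemma conj_lin: "conj_bp [:p, q:] = [:p, - q:]" by (simp add: conj_bp_def pcompose_pCons)
lemma conj_conj[simp]: "conj_bp (conj_bp F) = F"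
proof -
  have "pcompose [:0, -1:] [:0, -1:] = ([:0, 1:] :: complex poly poly)" by (simp add: pcompose_pCons)
  then show ?thesis unfolding conj_bp_def by (metis pcompose_assoc pcompose_idR)
qed
lemma conj_cq[simp]: "conj_bp (curve_eq h) = curve_eq h"
  by (simp add: curve_eq_def conj_bp_def pcompose_pCons)
lemma degree_conj: "degree (conj_bp F) = degree F" by (simp add: conj_bp_def degree_pcompose)

lemma iota_iota[simp]: "iota (iota P) = P" by (simp add: iota_def)
lemma on_curve_iota[simp]: "on_curve h (iota P) = on_curve h P" by (simp add: on_curve_def iota_def)
lemma iota_fst[simp]: "fst (iota P) = fst P" by (simp add: iota_def)
lemma iota_snd[simp]: "snd (iota P) = - snd P" by (simp add: iota_def)
lemma iota_eq_iff: "iota P = P \<longleftrightarrow> snd P = 0" by (cases P) (auto simp: iota_def)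
lemma inj_iota: "inj iota" by (metis injI iota_iota)
lemma bij_iota: "bij iota" by (metis bij_betw_def inj_iota iota_iota surj_def)

lemma conj_gen: assumes "is_id I" "\<And>s. s \<in> S \<Longrightarrow> conj_bp s \<in> I" "F \<in> gen_ideal S"
  shows "conj_bp F \<in> I"
proof -
  have "is_id {F. conj_bp F \<in> I}"
    by (rule is_idI) (use assms(1) in \<open>auto simp: conj_add conj_mult intro: is_id_0 is_id_add is_id_mult\<close>)
  then have "F \<in> {F. conj_bp F \<in> I}" using assms(2,3) gen_ideal_induct_id by blast
  then show ?thesis by simp
qed

context hcurve
begin

lemma conj_IC: "F \<in> I_C h \<Longrightarrow> conj_bp F \<in> I_C h"
  unfolding I_C_def by (rule conj_gen[OF is_id_gen]) (auto intro: gen_ideal.gen)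

lemma conj_IC_iff: "conj_bp F \<in> I_C h \<longleftrightarrow> F \<in> I_C h"
  using conj_IC conj_conj by metis

lemma conj_mP: "F \<in> I_pt h P \<Longrightarrow> conj_bp F \<in> I_pt h (iota P)"
proof (rule conj_gen[OF is_id_mP, where S = "{X_var - [:[:fst P:]:], Y_var - [:[:snd P:]:], curve_eq h}"])
  fix s assume "s \<in> {X_var - [:[:fst P:]:], Y_var - [:[:snd P:]:], curve_eq h}"
  moreover have "conj_bp (X_var - [:[:fst P:]:]) \<in> I_pt h (iota P)"
    using gen_X[of "iota P"] by (simp add: conj_diff cb_def)
  moreover have "conj_bp (Y_var - [:[:snd P:]:]) = - (Y_var - cb (snd (iota P)))"
    by (simp add: conj_diff cb_def)
  then have "conj_bp (Y_var - [:[:snd P:]:]) \<in> I_pt h (iota P)"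
    using is_id_uminus[OF is_id_mP gen_Y[of "iota P"]] by simp
  moreover have "conj_bp (curve_eq h) \<in> I_pt h (iota P)" using gen_C by simp
  ultimately show "conj_bp s \<in> I_pt h (iota P)" by blast
qed (simp add: I_pt_def)

lemma conj_pow: "F \<in> ideal_pow (I_pt h P) m \<Longrightarrow> conj_bp F \<in> ideal_pow (I_pt h (iota P)) m"
proof (induction m arbitrary: F)
  case 0 then show ?case by simp
next
  case (Suc m)
  have "F \<in> gen_ideal {a * b |a b. a \<in> I_pt h P \<and> b \<in> ideal_pow (I_pt h P) m}"
    using Suc.prems by (simp add: ideal_prod_def)
  then show ?case
  proof (rule conj_gen[OF is_id_ideal_pow, rotated])
    fix s assume "s \<in> {a * b |a b. a \<in> I_pt h P \<and> b \<in> ideal_pow (I_pt h P) m}"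
    then obtain a b where "s = a * b" "a \<in> I_pt h P" "b \<in> ideal_pow (I_pt h P) m" by blast
    then show "conj_bp s \<in> ideal_pow (I_pt h (iota P)) (Suc m)"
      using conj_mP Suc.IH by (simp add: conj_mult ideal_prod_mem)
  qed
qed

lemma conj_M: "F \<in> M P m \<Longrightarrow> conj_bp F \<in> M (iota P) m"
  unfolding M_gen
  by (rule conj_gen[OF is_id_gen]) (auto intro: gen_ideal.gen conj_pow conj_IC)

lemma conj_M_iff: "conj_bp F \<in> M (iota P) m \<longleftrightarrow> F \<in> M P m"
  using conj_M[of F P m] conj_M[of "conj_bp F" "iota P" m] by auto

lemma v_conj: assumes P: "on_curve h P" and F: "F \<notin> I_C h"
  shows "v (iota P) (conj_bp F) = v P F"
proof -
  have F': "conj_bp F \<notin> I_C h" using F conj_IC_iff by blast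
  have P': "on_curve h (iota P)" using P by simp
  have "m \<le> v (iota P) (conj_bp F) \<longleftrightarrow> m \<le> v P F" for m
    using M_iff_v[OF P' F'] M_iff_v[OF P F] conj_M_iff by blast
  then show ?thesis by (meson le_antisym order_refl)
qed

lemma v_conj': assumes P: "on_curve h P" and F: "F \<notin> I_C h"
  shows "v P (conj_bp F) = v (iota P) F"
  using v_conj[of "iota P" F] P F by simp

definition nrm :: "bpoly \<Rightarrow> complex poly" where
  "nrm F = coeff (red F) 0 * coeff (red F) 0 - h * (coeff (red F) 1 * coeff (red F) 1)"

lemma red_form: "red F = [:coeff (red F) 0, coeff (red F) 1:]"
  by (rule deg1_form[OF red_props(2)])

lemma nrm_lin: "[:p, q:] * conj_bp [:p, q:] - [:p * p - h * (q * q):] = [:- (q * q):] * curve_eq h"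
  by (simp add: conj_lin curve_eq_def algebra_simps)

lemma nrm_prop: "F * conj_bp F - [:nrm F:] \<in> I_C h"
proof -
  define p q where "p = coeff (red F) 0" and "q = coeff (red F) 1"
  have R: "red F = [:p, q:]" unfolding p_def q_def by (rule red_form)
  have d: "F - [:p, q:] \<in> I_C h" using red_props(1)[of F] R by simp
  have d': "conj_bp F - conj_bp [:p, q:] \<in> I_C h" using conj_IC[OF d] by (simp add: conj_diff)
  have "F * conj_bp F - [:nrm F:] = (F - [:p, q:]) * conj_bp F + [:p, q:] * (conj_bp F - conj_bp [:p, q:])
      + ([:p, q:] * conj_bp [:p, q:] - [:p * p - h * (q * q):])"
    unfolding nrm_def p_def[symmetric] q_def[symmetric] by (simp add: algebra_simps)
  also have "\<dots> \<in> I_C h"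
    unfolding nrm_lin using d d' cq_IC
    by (intro is_id_add[OF is_id_IC] is_id_mult[OF is_id_IC] is_id_mult2[OF is_id_IC])
  finally show ?thesis .
qed

lemma const_IC: "[:c:] \<in> I_C h \<Longrightarrow> c = 0"
  using small_IC[of "[:c:]"] by simp

lemma nrm_unique: "F * conj_bp F - [:c:] \<in> I_C h \<Longrightarrow> c = nrm F"
proof -
  assume a: "F * conj_bp F - [:c:] \<in> I_C h"
  have "(F * conj_bp F - [:nrm F:]) - (F * conj_bp F - [:c:]) \<in> I_C h"
    using a nrm_prop is_id_diff[OF is_id_IC] by blast
  then have "[:c - nrm F:] \<in> I_C h" by simp
  then show ?thesis using const_IC[of "c - nrm F"] by simp
qed

lemma nrm_mult: "nrm (F * G) = nrm F * nrm G"
proof -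
  have "(F * G) * conj_bp (F * G) - [:nrm F * nrm G:] =
      (F * conj_bp F - [:nrm F:]) * (G * conj_bp G) + [:nrm F:] * (G * conj_bp G - [:nrm G:])"
    by (simp add: conj_mult algebra_simps)
  also have "\<dots> \<in> I_C h" using nrm_prop
    by (intro is_id_add[OF is_id_IC] is_id_mult[OF is_id_IC] is_id_mult2[OF is_id_IC])
  finally show ?thesis by (rule nrm_unique[symmetric])
qed

lemma nrm_conj: "nrm (conj_bp F) = nrm F"
proof -
  have "conj_bp F * conj_bp (conj_bp F) - [:nrm F:] = conj_bp (F * conj_bp F - [:nrm F:])"
    by (simp add: conj_mult conj_diff mult.commute)
  also have "\<dots> \<in> I_C h" by (rule conj_IC[OF nrm_prop])
  finally show ?thesis by (rule nrm_unique[symmetric])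
qed

lemma nrm_const: "nrm [:c:] = c * c"
proof -
  have "[:c:] * conj_bp [:c:] - [:c * c:] = 0" by simp
  then show ?thesis using nrm_unique[of "[:c:]" "c * c"] is_id_0[OF is_id_IC] by simp
qed

lemma nrm_IC: "F - G \<in> I_C h \<Longrightarrow> nrm F = nrm G"
proof -
  assume d: "F - G \<in> I_C h"
  have "F * conj_bp F - [:nrm G:] = (F - G) * conj_bp F + G * conj_bp (F - G) + (G * conj_bp G - [:nrm G:])"
    by (simp add: conj_diff algebra_simps)
  also have "\<dots> \<in> I_C h" using d nrm_prop conj_IC[OF d]
    by (intro is_id_add[OF is_id_IC] is_id_mult[OF is_id_IC] is_id_mult2[OF is_id_IC])
  finally show ?thesis by (rule nrm_unique[symmetric])
qed

lemma v_IC: assumes P: "on_curve h P" and d: "F - G \<in> I_C h" shows "v P F = v P G"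
  using ev_IC[OF P d] by (simp add: v_def ev_diff)

lemma nrm_nz: "F \<notin> I_C h \<Longrightarrow> nrm F \<noteq> 0"
proof -
  assume F: "F \<notin> I_C h"
  define p q where "p = coeff (red F) 0" and "q = coeff (red F) 1"
  have R: "red F = [:p, q:]" unfolding p_def q_def by (rule red_form)
  have "red F \<noteq> 0" using F IC_iff_red by blast
  then have pq: "\<not> (p = 0 \<and> q = 0)" using R by auto
  have e: "nrm F = p * p - h * (q * q)" unfolding nrm_def p_def q_def ..
  show ?thesis
  proof
    assume "nrm F = 0"
    then have "p * p = h * (q * q)" using e by simp
    then show False using norm_zero pq by blast
  qed
qed

lemma v_nrm: assumes P: "on_curve h P" and F: "F \<notin> I_C h"
  shows "v P [:nrm F:] = v P F + v (iota P) F"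
proof -
  have F': "conj_bp F \<notin> I_C h" using F conj_IC_iff by blast
  have "v P [:nrm F:] = v P (F * conj_bp F)"
    using v_IC[OF P nrm_prop[of F]] by simp
  also have "\<dots> = v P F + v P (conj_bp F)" by (rule v_mult[OF P F F'])
  finally show ?thesis using v_conj'[OF P F] by simp
qed

end


lemma roots_order_sum:
  fixes N :: "complex poly"
  assumes "N \<noteq> 0" shows "(\<Sum>x\<in>{x. poly N x = 0}. order x N) = degree N"
  using assms
proof (induction "degree N" arbitrary: N)
  case 0
  then obtain c where "N = [:c:]" "c \<noteq> 0" by (metis degree_eq_zeroE pCons_eq_0_iff)
  then show ?case by simp
next
  case (Suc n)
  have "\<not> constant (poly N)" using Suc.hyps constant_degree by (metis nat.distinct(1))
  then obtain a where a: "poly N a = 0" using fundamental_theorem_of_algebra by blast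
  then obtain N' where N': "N = [:- a, 1:] * N'" using poly_eq_0_iff_dvd by (metis dvdE)
  have N'0: "N' \<noteq> 0" using Suc.prems N' by auto
  have "degree ([:- a, 1:] * N') = degree [:- a, 1:] + degree N'"
    by (rule degree_mult_eq) (use N'0 in simp_all)
  then have "degree N = Suc (degree N')" by (simp only: N') simp
  then have dN': "degree N' = n" using Suc.hyps by simp
  have R: "{x. poly N x = 0} = insert a {x. poly N' x = 0}" using N' by auto
  have fin: "finite {x. poly N x = 0}" using poly_roots_finite Suc.prems by blast
  have "(\<Sum>x\<in>{x. poly N x = 0}. order x N) =
        (\<Sum>x\<in>{x. poly N x = 0}. order x [:- a, 1:]) + (\<Sum>x\<in>{x. poly N x = 0}. order x N')"
    unfolding sum.distrib[symmetric]
  proof (intro sum.cong refl)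
    fix x
    have nz: "[:- a, 1:] * N' \<noteq> 0" using N'0 by (simp only: mult_eq_0_iff) simp
    show "order x N = order x [:- a, 1:] + order x N'"
      unfolding N' by (rule order_mult[OF nz])
  qed
  also have "(\<Sum>x\<in>{x. poly N x = 0}. order x [:- a, 1:]) = 1"
  proof -
    have "(\<Sum>x\<in>{x. poly N x = 0}. order x [:- a, 1:]) = (\<Sum>x\<in>{a}. order x [:- a, 1:])"
      using fin a by (intro sum.mono_neutral_right) (auto simp: order_0I)
    also have "\<dots> = 1" using order_power_n_n[of a 1] by simp
    finally show ?thesis .
  qed
  also have "(\<Sum>x\<in>{x. poly N x = 0}. order x N') = (\<Sum>x\<in>{x. poly N' x = 0}. order x N')"
    using fin R by (intro sum.mono_neutral_right) (auto simp: order_0I)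
  also have "\<dots> = n" using Suc.hyps(1)[of N'] dN' N'0 by simp
  finally show ?case using Suc.hyps by simp
qed

context hcurve
begin

lemma fiber: assumes "on_curve h P" "on_curve h Q" "fst Q = fst P" shows "Q = P \<or> Q = iota P"
proof -
  have "(snd Q)^2 = (snd P)^2" using assms by (simp add: on_curve_def)
  then have "snd Q = snd P \<or> snd Q = - snd P" by (simp add: power2_eq_iff)
  then show ?thesis using assms(3) by (cases P, cases Q) (auto simp: iota_def)
qed

definition fib :: "complex \<Rightarrow> point set" where "fib x = {P. on_curve h P \<and> fst P = x}"

lemma fib_eq: "fib x = {(x, csqrt (poly h x)), (x, - csqrt (poly h x))}"
proof -
  have "on_curve h (x, csqrt (poly h x))" by (simp add: on_curve_def)
  then show ?thesis using fiber[of "(x, csqrt (poly h x))"]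
    by (auto simp: fib_def iota_def on_curve_def)
qed

lemma fib_finite: "finite (fib x)" by (simp add: fib_eq)

lemma sum_fib: "(\<Sum>P\<in>fib x. ee P * k) = 2 * k"
proof (cases "csqrt (poly h x) = 0")
  case True
  then show ?thesis by (simp add: fib_eq ee_def)
next
  case False
  then have "(x, csqrt (poly h x)) \<noteq> (x, - csqrt (poly h x))" by simp
  then show ?thesis using False by (simp add: fib_eq ee_def)
qed

definition Zs :: "complex poly \<Rightarrow> point set" where
  "Zs N = {P. on_curve h P \<and> poly N (fst P) = 0}"

lemma Zs_UN: "Zs N = (\<Union>x\<in>{x. poly N x = 0}. fib x)"
  by (auto simp: Zs_def fib_def)

lemma Zs_finite: "N \<noteq> 0 \<Longrightarrow> finite (Zs N)"
  unfolding Zs_UN using poly_roots_finite fib_finite by blast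

lemma Zs_iota: "P \<in> Zs N \<Longrightarrow> iota P \<in> Zs N" by (simp add: Zs_def)

lemma sum_Zs: assumes "N \<noteq> 0"
  shows "(\<Sum>P\<in>Zs N. ee P * order (fst P) N) = 2 * degree N"
proof -
  have "(\<Sum>P\<in>Zs N. ee P * order (fst P) N) = (\<Sum>x\<in>{x. poly N x = 0}. \<Sum>P\<in>fib x. ee P * order (fst P) N)"
    unfolding Zs_UN using poly_roots_finite[OF assms] fib_finite
    by (intro sum.UNION_disjoint) (auto simp: fib_def)
  also have "\<dots> = (\<Sum>x\<in>{x. poly N x = 0}. 2 * order x N)"
  proof (intro sum.cong refl)
    fix x
    have "(\<Sum>P\<in>fib x. ee P * order (fst P) N) = (\<Sum>P\<in>fib x. ee P * order x N)"
      by (intro sum.cong refl) (simp add: fib_def)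
    then show "(\<Sum>P\<in>fib x. ee P * order (fst P) N) = 2 * order x N" using sum_fib by simp
  qed
  also have "\<dots> = 2 * degree N" using roots_order_sum[OF assms] by (simp add: sum_distrib_left[symmetric])
  finally show ?thesis .
qed

lemma sum_iota: assumes "finite A" "\<And>P. P \<in> A \<Longrightarrow> iota P \<in> A"
  shows "(\<Sum>P\<in>A. f (iota P)) = (\<Sum>P\<in>A. f P)"
proof -
  have "iota ` A = A" using assms(2) by (force intro: image_eqI[of _ iota "iota _"])
  moreover have "inj_on iota A" by (rule inj_on_subset[OF inj_iota]) simp
  ultimately show ?thesis using sum.reindex[of iota A f] by simp
qed

lemma v_nz_Zs: assumes P: "on_curve h P" and F: "F \<notin> I_C h" and nz: "v P F \<noteq> 0"
  shows "P \<in> Zs (nrm F)"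
proof -
  have "v P [:nrm F:] \<noteq> 0" using v_nrm[OF P F] nz by simp
  then have "order (fst P) (nrm F) \<noteq> 0" using v_const[OF P nrm_nz[OF F]] by simp
  then show ?thesis using P nrm_nz[OF F] order_root by (auto simp: Zs_def)
qed

lemma sum_v: assumes F: "F \<notin> I_C h"
  shows "finite {P. on_curve h P \<and> v P F \<noteq> 0}"
    "(\<Sum>P\<in>{P. on_curve h P \<and> v P F \<noteq> 0}. v P F) = degree (nrm F)"
proof -
  let ?N = "nrm F"
  have N: "?N \<noteq> 0" by (rule nrm_nz[OF F])
  have sub: "{P. on_curve h P \<and> v P F \<noteq> 0} \<subseteq> Zs ?N" using v_nz_Zs[OF _ F] by auto
  show fin: "finite {P. on_curve h P \<and> v P F \<noteq> 0}" using Zs_finite[OF N] sub finite_subset by blast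
  have "(\<Sum>P\<in>{P. on_curve h P \<and> v P F \<noteq> 0}. v P F) = (\<Sum>P\<in>Zs ?N. v P F)"
    using Zs_finite[OF N] sub by (intro sum.mono_neutral_left) (auto simp: Zs_def)
  moreover have "(\<Sum>P\<in>Zs ?N. v (iota P) F) = (\<Sum>P\<in>Zs ?N. v P F)"
    using sum_iota[OF Zs_finite[OF N] Zs_iota] .
  moreover have "(\<Sum>P\<in>Zs ?N. v P F + v (iota P) F) = 2 * degree ?N"
  proof -
    have "(\<Sum>P\<in>Zs ?N. v P F + v (iota P) F) = (\<Sum>P\<in>Zs ?N. ee P * order (fst P) ?N)"
      by (intro sum.cong refl) (simp add: Zs_def v_nrm[OF _ F, symmetric] v_const[OF _ N])
    then show ?thesis using sum_Zs[OF N] by simp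
  qed
  ultimately show "(\<Sum>P\<in>{P. on_curve h P \<and> v P F \<noteq> 0}. v P F) = degree ?N"
    by (simp add: sum.distrib)
qed

lemma mono_less_asym: "mono_less g m m' \<Longrightarrow> \<not> mono_less g m' m"
  by (auto simp: mono_less_def)

lemma lead_monoI:
  assumes "m \<in> supp F" "\<And>m'. m' \<in> supp F \<Longrightarrow> m' \<noteq> m \<Longrightarrow> mono_less g m' m"
  shows "lead_mono g F = m"
  unfolding lead_mono_def
proof (rule the_equality)
  show "m \<in> supp F \<and> (\<forall>m'\<in>supp F. m' \<noteq> m \<longrightarrow> mono_less g m' m)" using assms by blast
  fix m1 assume m1: "m1 \<in> supp F \<and> (\<forall>m'\<in>supp F. m' \<noteq> m1 \<longrightarrow> mono_less g m' m1)"
  show "m1 = m"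
  proof (rule ccontr)
    assume "m1 \<noteq> m"
    then have "mono_less g m1 m" "mono_less g m m1" using m1 assms by auto
    then show False using mono_less_asym by blast
  qed
qed

lemma coeff_lin: "coeff [:p, q:] b = (if b = 0 then p else if b = 1 then q else 0)"
  by (cases b) (simp_all add: coeff_pCons split: nat.split)

lemma supp_lin: "supp [:p, q:] = {(a, 0) |a. coeff p a \<noteq> 0} \<union> {(a, 1) |a. coeff q a \<noteq> 0}"
  by (auto simp: supp_def coeff_lin split: if_splits)

lemma degw_lin:
  assumes nz: "[:p, q:] \<noteq> 0"
  shows "deg_w g [:p, q:] = degree (p * p - h * (q * q))"
proof -
  define W where "W = (if q = 0 then 2 * degree p else if p = 0 then 2 * degree q + (2 * g + 1)
      else max (2 * degree p) (2 * degree q + (2 * g + 1)))"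
  define m where "m = (if q = 0 then (degree p, 0::nat) else if p = 0 then (degree q, 1)
      else if 2 * degree p > 2 * degree q + (2 * g + 1) then (degree p, 0) else (degree q, 1))"
  have pq: "p \<noteq> 0 \<or> q \<noteq> 0" using nz by auto
  have wm: "wdeg g m = W" unfolding m_def W_def wdeg_def using pq by auto
  have A: "(degree p, 0) \<in> supp [:p, q:]" if "p \<noteq> 0" using that by (simp add: supp_def)
  have B: "(degree q, 1) \<in> supp [:p, q:]" if "q \<noteq> 0" using that by (simp add: supp_def)
  have msupp: "m \<in> supp [:p, q:]" unfolding m_def using pq A B by auto
  have le: "wdeg g m' \<le> W" if "m' \<in> supp [:p, q:]" for m'
  proof -
    from that consider a where "m' = (a, 0)" "coeff p a \<noteq> 0" | a where "m' = (a, 1)" "coeff q a \<noteq> 0"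
      unfolding supp_lin by blast
    then show ?thesis
    proof cases
      case 1
      then have "a \<le> degree p" "p \<noteq> 0" by (auto simp: le_degree)
      then show ?thesis using 1 unfolding W_def wdeg_def by auto
    next
      case 2
      then have "a \<le> degree q" "q \<noteq> 0" by (auto simp: le_degree)
      then show ?thesis using 2 unfolding W_def wdeg_def by auto
    qed
  qed
  have eq: "m' = m" if "m' \<in> supp [:p, q:]" "wdeg g m' = W" for m'
  proof -
    from that(1) consider a where "m' = (a, 0)" "coeff p a \<noteq> 0" | a where "m' = (a, 1)" "coeff q a \<noteq> 0"
      unfolding supp_lin by blast
    then show ?thesis
    proof cases
      case 1
      then have "a \<le> degree p" by (simp add: le_degree)
      then show ?thesis using that(2) 1 unfolding W_def m_def wdeg_def by (auto split: if_splits; presburger)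
    next
      case 2
      then have "a \<le> degree q" by (simp add: le_degree)
      then show ?thesis using that(2) 2 unfolding W_def m_def wdeg_def by (auto split: if_splits; presburger)
    qed
  qed
  have "lead_mono g [:p, q:] = m"
  proof (rule lead_monoI[OF msupp])
    fix m' assume "m' \<in> supp [:p, q:]" "m' \<noteq> m"
    then have "wdeg g m' < wdeg g m" using le eq wm by fastforce
    then show "mono_less g m' m" by (simp add: mono_less_def)
  qed
  then have "deg_w g [:p, q:] = W" using wm by (simp add: deg_w_def)
  also have "W = degree (p * p - h * (q * q))"
  proof -
    have dh: "degree (h * (q * q)) = 2 * degree q + (2 * g + 1)" if "q \<noteq> 0"
      using that h_nz deg_h by (simp add: degree_mult_eq)
    have dp: "degree (p * p) = 2 * degree p" if "p \<noteq> 0" using that by (simp add: degree_mult_eq)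
    show ?thesis
    proof (cases "q = 0")
      case True then show ?thesis using dp by (cases "p = 0") (auto simp: W_def)
    next
      case q: False
      show ?thesis
      proof (cases "p = 0")
        case True then show ?thesis using q dh by (simp add: W_def)
      next
        case p: False
        have ne: "2 * degree p \<noteq> 2 * degree q + (2 * g + 1)" by presburger
        show ?thesis
        proof (cases "2 * degree p > 2 * degree q + (2 * g + 1)")
          case True
          then have "degree (p * p + - (h * (q * q))) = degree (p * p)"
            using dh[OF q] dp[OF p] by (intro degree_add_eq_left) simp
          then show ?thesis using True p q dp by (simp add: W_def)
        next
          case False
          then have lt: "2 * degree p < 2 * degree q + (2 * g + 1)" using ne by linarith
          then have "degree (p * p + - (h * (q * q))) = degree (- (h * (q * q)))"
            using dh[OF q] dp[OF p] by (intro degree_add_eq_right) simp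
          then show ?thesis using False p q dh lt by (simp add: W_def)
        qed
      qed
    qed
  qed
  finally show ?thesis .
qed

lemma degw_nrm: assumes "degree F \<le> 1" "F \<notin> I_C h" shows "deg_w g F = degree (nrm F)"
proof -
  have F: "F = [:coeff F 0, coeff F 1:]" by (rule deg1_form[OF assms(1)])
  have "F \<noteq> 0" using assms(2) is_id_0[OF is_id_IC] by auto
  then have nz: "[:coeff F 0, coeff F 1:] \<noteq> 0" using F by metis
  have "deg_w g F = deg_w g [:coeff F 0, coeff F 1:]" using F by metis
  then have "deg_w g F = degree (coeff F 0 * coeff F 0 - h * (coeff F 1 * coeff F 1))"
    using degw_lin[OF nz] by simp
  also have "\<dots> = degree (nrm F)" using red_small[OF assms(1)] by (simp add: nrm_def)
  finally show ?thesis .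
qed

lemma ord_inf_nrm: assumes "F \<notin> I_C h" shows "ord_inf g h F = - int (degree (nrm F))"
proof -
  have "pseudo_mod F (curve_eq h) = red F" by (simp add: red_def)
  moreover have "red F \<notin> I_C h" using assms red_props(1)[of F] is_id_add[OF is_id_IC] by force
  ultimately show ?thesis using degw_nrm[OF red_props(2), of F] nrm_IC[OF red_props(1)[of F]]
    by (simp add: ord_inf_def)
qed

end


lemma coeff1_pcompose_sq: "coeff (pcompose r [:0, 0, 1:]) (Suc 0) = (0::complex)"
  by (induction r) (simp_all add: pcompose_pCons coeff_pCons)

context hcurve
begin

lemma phi_0th: "phi P c $ 0 = poly c (fst P)"
  by (simp add: phi_def xi0)

lemma ev_lin_0th: "ev P [:p, q:] $ 0 = poly p (fst P) + snd P * poly q (fst P)"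
  by (simp add: ev_lin phi_0th Yf0)

lemma lin_div:
  assumes M: "\<And>Q. on_curve h Q \<Longrightarrow> fst Q = a \<Longrightarrow> \<Psi> \<in> M Q (ee Q)"
  shows "\<exists>\<Psi>'. \<Psi> - [:[:- a, 1:]:] * \<Psi>' \<in> I_C h"
proof -
  define p q where "p = coeff (red \<Psi>) 0" and "q = coeff (red \<Psi>) 1"
  have R: "red \<Psi> = [:p, q:]" unfolding p_def q_def by (rule red_form)
  have evR: "ev Q \<Psi> = ev Q [:p, q:]" if "on_curve h Q" for Q using ev_red[OF that, of \<Psi>] R by simp
  have dv: "fps_X ^ ee Q dvd ev Q [:p, q:]" if "on_curve h Q" "fst Q = a" for Q
    using char[OF that(1)] M[OF that] evR[OF that(1)] by simp
  have pq0: "poly p a = 0 \<and> poly q a = 0"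
  proof (cases "poly h a = 0")
    case False
    define s where "s = csqrt (poly h a)"
    have s0: "s \<noteq> 0" using False by (simp add: s_def)
    have on1: "on_curve h (a, s)" and on2: "on_curve h (a, - s)" by (simp_all add: on_curve_def s_def)
    have ee1: "ee (a, s) = 1" "ee (a, - s) = 1" using s0 by (simp_all add: ee_def)
    have "ev (a, s) [:p, q:] $ 0 = 0" using dv[OF on1] ee1 X_dvd_iff by simp
    then have e1: "poly p a + s * poly q a = 0" by (simp add: ev_lin_0th)
    have "ev (a, - s) [:p, q:] $ 0 = 0" using dv[OF on2] ee1 X_dvd_iff by simp
    then have e2: "poly p a - s * poly q a = 0" by (simp add: ev_lin_0th)
    from e1 e2 have "2 * s * poly q a = 0" by (simp add: algebra_simps)
    then have "poly q a = 0" using s0 by simp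
    then show ?thesis using e1 by simp
  next
    case True
    have on: "on_curve h (a, 0)" using True by (simp add: on_curve_def)
    have "fps_X ^ 2 dvd ev (a, 0) [:p, q:]" using dv[OF on] by (simp add: ee_def)
    then have c0: "ev (a, 0) [:p, q:] $ 0 = 0" and c1: "ev (a, 0) [:p, q:] $ 1 = 0"
      unfolding Xpow_dvd_iff' by auto
    from c0 have p0: "poly p a = 0" by (simp add: ev_lin_0th)
    have "phi (a, 0) p $ 1 = 0"
    proof -
      have "pcompose p [:a, 0, 1:] = pcompose (pcompose p [:a, 1:]) [:0, 0, 1:]"
        by (simp add: pcompose_assoc[symmetric] pcompose_pCons)
      then show ?thesis by (simp add: phi_def xi_def coeff1_pcompose_sq)
    qed
    moreover have "(Yf (a, 0) * phi (a, 0) q) $ 1 = Rb a $ 0 * poly q a"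
      by (simp add: Yf_def mult.assoc phi_0th fps_mult_nth_0)
    ultimately have "Rb a $ 0 * poly q a = 0" using c1 by (simp add: ev_lin)
    then have "poly q a = 0" using Rb_sq(2)[OF True] by simp
    then show ?thesis using p0 by simp
  qed
  obtain p' where p': "p = [:- a, 1:] * p'" using pq0 poly_eq_0_iff_dvd by (metis dvdE)
  obtain q' where q': "q = [:- a, 1:] * q'" using pq0 poly_eq_0_iff_dvd by (metis dvdE)
  have "red \<Psi> = [:[:- a, 1:]:] * [:p', q':]" using R p' q' by simp
  then have "\<Psi> - [:[:- a, 1:]:] * [:p', q':] \<in> I_C h" using red_props(1)[of \<Psi>] by simp
  then show ?thesis by blast
qed

lemma v_lin: assumes Q: "on_curve h Q"
  shows "v Q [:[:- a, 1:]:] = (if fst Q = a then ee Q else 0)"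
  using v_const[OF Q, of "[:- a, 1:]"] order_power_n_n[of a 1]
  by (auto simp: order_0I)

lemma const_notIC: "c \<noteq> 0 \<Longrightarrow> [:c:] \<notin> I_C h" using const_IC by blast

lemma division:
  fixes c :: "complex poly"
  assumes "c \<noteq> 0" "\<And>Q. on_curve h Q \<Longrightarrow> \<Psi> \<in> M Q (v Q [:c:])"
  shows "\<exists>\<phi>. \<Psi> - [:c:] * \<phi> \<in> I_C h"
  using assms
proof (induction "degree c" arbitrary: c \<Psi>)
  case 0
  then obtain k where k: "c = [:k:]" "k \<noteq> 0" by (metis degree_eq_zeroE pCons_eq_0_iff)
  have one: "[:c:] * [:[:1 / k:]:] = 1"
  proof -
    have "[:c:] * [:[:1 / k:]:] = [:[:k * (1 / k):]:]" using k(1) by simp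
    also have "\<dots> = 1" using k(2) by (simp add: one_pCons)
    finally show ?thesis .
  qed
  have "\<Psi> - [:c:] * ([:[:1 / k:]:] * \<Psi>) = 0" by (simp only: mult.assoc[symmetric] one) simp
  then show ?case using is_id_0[OF is_id_IC] by metis
next
  case (Suc n)
  have "\<not> constant (poly c)" using Suc.hyps constant_degree by (metis nat.distinct(1))
  then obtain a where a: "poly c a = 0" using fundamental_theorem_of_algebra by blast
  then obtain c' where c': "c = [:- a, 1:] * c'" using poly_eq_0_iff_dvd by (metis dvdE)
  have c'0: "c' \<noteq> 0" using Suc.prems c' by auto
  have "degree ([:- a, 1:] * c') = degree [:- a, 1:] + degree c'"
    by (rule degree_mult_eq) (use c'0 in simp_all)
  then have "degree c = Suc (degree c')" by (simp only: c') simp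
  then have dc': "n = degree c'" using Suc.hyps by simp
  define Xa where "Xa = ([:[:- a, 1:]:] :: bpoly)"
  have Xa_nIC: "Xa \<notin> I_C h" unfolding Xa_def by (rule const_notIC) simp
  have cc: "[:c:] = Xa * [:c':]" by (simp add: Xa_def c')
  have vc: "v Q [:c:] = v Q Xa + v Q [:c':]" if "on_curve h Q" for Q
    unfolding cc by (rule v_mult[OF that Xa_nIC const_notIC[OF c'0]])
  have "\<Psi> \<in> M Q (ee Q)" if "on_curve h Q" "fst Q = a" for Q
  proof -
    have "v Q Xa = ee Q" using v_lin[OF that(1)] that(2) by (simp add: Xa_def)
    then have "ee Q \<le> v Q [:c:]" using vc[OF that(1)] by simp
    then show ?thesis using M_anti Suc.prems(2)[OF that(1)] by blast
  qed
  then obtain \<Psi>' where \<Psi>': "\<Psi> - Xa * \<Psi>' \<in> I_C h" using lin_div unfolding Xa_def by blast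
  have M': "\<Psi>' \<in> M Q (v Q [:c':])" if Q: "on_curve h Q" for Q
  proof (cases "\<Psi>' \<in> I_C h")
    case True then show ?thesis by (rule IC_M)
  next
    case False
    have XP: "Xa * \<Psi>' \<notin> I_C h" by (rule IC_mult[OF Xa_nIC False])
    have PN: "\<Psi> \<notin> I_C h"
    proof
      assume "\<Psi> \<in> I_C h"
      then have "\<Psi> - (\<Psi> - Xa * \<Psi>') \<in> I_C h" using \<Psi>' is_id_diff[OF is_id_IC] by blast
      then show False using XP by simp
    qed
    have "v Q \<Psi> = v Q (Xa * \<Psi>')" by (rule v_IC[OF Q \<Psi>'])
    also have "\<dots> = v Q Xa + v Q \<Psi>'" by (rule v_mult[OF Q Xa_nIC False])
    finally have "v Q [:c:] \<le> v Q Xa + v Q \<Psi>'" using Suc.prems(2)[OF Q] M_iff_v[OF Q PN] by simp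
    then have "v Q [:c':] \<le> v Q \<Psi>'" using vc[OF Q] by simp
    then show ?thesis using M_iff_v[OF Q False] by simp
  qed
  obtain \<phi> where \<phi>: "\<Psi>' - [:c':] * \<phi> \<in> I_C h" using Suc.hyps(1)[OF dc' c'0 M'] by blast
  have "\<Psi> - [:c:] * \<phi> = (\<Psi> - Xa * \<Psi>') + Xa * (\<Psi>' - [:c':] * \<phi>)"
    by (simp add: cc algebra_simps)
  also have "\<dots> \<in> I_C h" using \<Psi>' \<phi> by (intro is_id_add[OF is_id_IC] is_id_mult[OF is_id_IC])
  finally show ?case by blast
qed

end


lemma cb2: "cb 2 = 2" by (metis cb_add cb_1 one_add_one)

context hcurve
begin

definition Vs :: "(point \<Rightarrow> nat) \<Rightarrow> bpoly set" where
  "Vs A = {F. \<forall>P. on_curve h P \<longrightarrow> F \<in> M P (A P)}"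

definition KK :: "bpoly set \<Rightarrow> bpoly set \<Rightarrow> bpoly set" where
  "KK X Y = gen_ideal (ideal_prod X Y \<union> I_C h)"

lemma is_id_Vs: "is_id (Vs A)"
  by (rule is_idI) (auto simp: Vs_def intro: is_id_0[OF is_id_M] is_id_add[OF is_id_M] is_id_mult[OF is_id_M])

lemma IC_Vs: "F \<in> I_C h \<Longrightarrow> F \<in> Vs A" by (simp add: Vs_def IC_M)

lemma is_id_KK: "is_id (KK X Y)" by (simp add: KK_def is_id_gen)
lemma KK_prod: "a \<in> X \<Longrightarrow> b \<in> Y \<Longrightarrow> a * b \<in> KK X Y"
  unfolding KK_def by (rule gen_ideal.gen) (simp add: ideal_prod_mem)
lemma KK_IC: "c \<in> I_C h \<Longrightarrow> c \<in> KK X Y"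
  unfolding KK_def by (rule gen_ideal.gen) simp
lemma KK_mono: "X \<subseteq> X' \<Longrightarrow> Y \<subseteq> Y' \<Longrightarrow> KK X Y \<subseteq> KK X' Y'"
  unfolding KK_def by (intro gen_ideal_mono Un_mono ideal_prod_mono) auto

lemma KK_least: assumes "is_id T" "I_C h \<subseteq> T" "\<And>a b. a \<in> X \<Longrightarrow> b \<in> Y \<Longrightarrow> a * b \<in> T"
  shows "KK X Y \<subseteq> T"
  unfolding KK_def
proof (rule gen_ideal_least[OF _ assms(1)])
  show "ideal_prod X Y \<union> I_C h \<subseteq> T" using ideal_prod_least[of X Y T] assms by blast
qed

lemma I_div_Vs: assumes "effective h A" shows "I_div h A = Vs A"
proof
  show "I_div h A \<subseteq> Vs A"
  proof
    fix F assume F: "F \<in> I_div h A"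
    show "F \<in> Vs A" unfolding Vs_def
    proof (intro CollectI allI impI)
      fix P assume "on_curve h P"
      show "F \<in> M P (A P)"
      proof (cases "A P = 0")
        case True then show ?thesis by (simp add: M_0)
      next
        case False then show ?thesis using F unfolding I_div_def M_gen by blast
      qed
    qed
  qed
  show "Vs A \<subseteq> I_div h A"
    using assms by (auto simp: I_div_def Vs_def effective_def M_gen)
qed

lemma branch_key:
  assumes P: "on_curve h P" and y0: "snd P = 0"
  shows "\<exists>k2 c. c \<noteq> 0 \<and> cb c * (X_var - cb (fst P)) =
     Y_var * Y_var - curve_eq h - (X_var - cb (fst P)) * (X_var - cb (fst P)) * [:k2:]"
proof -
  define x0 where "x0 = fst P"
  have h0: "poly h x0 = 0" using P y0 by (simp add: on_curve_def x0_def)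
  define K where "K = Kp x0"
  have hK: "h = [:- x0, 1:] * K" using Kp_fact[OF h0] by (simp add: K_def)
  have K0: "poly K x0 \<noteq> 0" using Kp_nz[OF h0] by (simp add: K_def)
  obtain k2 where k2: "K - [:poly K x0:] = [:- x0, 1:] * k2" using lin_dvd_sub by (metis dvdE)
  define Xm where "Xm = X_var - cb x0"
  have hk: "[:h:] = Xm * [:K:]" by (simp only: hK Xm_const Xm_def)
  have kk: "[:K:] = cb (poly K x0) + Xm * [:k2:]"
  proof -
    have "K = [:poly K x0:] + [:- x0, 1:] * k2" using k2 by (simp add: algebra_simps)
    then have "[:K:] = [:[:poly K x0:]:] + [:[:- x0, 1:] * k2:]" by (metis const_add)
    then show ?thesis by (simp only: Xm_const Xm_def cb_def)
  qed
  have key: "cb (poly K x0) * Xm = Y_var * Y_var - curve_eq h - Xm * Xm * [:k2:]"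
    unfolding cq_eq hk kk by (simp add: algebra_simps)
  then show ?thesis using K0 by (auto simp: Xm_def x0_def)
qed

lemma u_prod: assumes P: "on_curve h P"
  shows "X_var - cb (fst P) \<in> KK (I_pt h P) (I_pt h (iota P))"
proof (cases "snd P = 0")
  case True
  have iP: "iota P = P" using True iota_eq_iff by blast
  obtain k2 c where kc: "c \<noteq> 0" "cb c * (X_var - cb (fst P)) =
     Y_var * Y_var - curve_eq h - (X_var - cb (fst P)) * (X_var - cb (fst P)) * [:k2:]"
    using branch_key[OF P True] by blast
  have Y: "Y_var \<in> I_pt h P" using gen_Y[of P] True by simp
  have "Y_var * Y_var - curve_eq h - (X_var - cb (fst P)) * (X_var - cb (fst P)) * [:k2:] \<in> KK (I_pt h P) (I_pt h (iota P))"
  proof -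
    have a1: "Y_var * Y_var \<in> KK (I_pt h P) (I_pt h P)" by (rule KK_prod[OF Y Y])
    have "(X_var - cb (fst P)) * (X_var - cb (fst P)) \<in> KK (I_pt h P) (I_pt h P)" by (rule KK_prod[OF gen_X gen_X])
    then have a3: "(X_var - cb (fst P)) * (X_var - cb (fst P)) * [:k2:] \<in> KK (I_pt h P) (I_pt h P)"
      by (rule is_id_mult2[OF is_id_KK])
    have a4: "curve_eq h \<in> KK (I_pt h P) (I_pt h P)" by (rule KK_IC[OF cq_IC])
    show ?thesis unfolding iP using a1 a3 a4 is_id_diff[OF is_id_KK] by blast
  qed
  then have "cb (1 / c) * (cb c * (X_var - cb (fst P))) \<in> KK (I_pt h P) (I_pt h (iota P))"
    unfolding kc(2) by (rule is_id_mult[OF is_id_KK])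
  moreover have "cb (1 / c) * (cb c * (X_var - cb (fst P))) = X_var - cb (fst P)"
    using kc(1) by (simp add: mult.assoc[symmetric] cb_mult[symmetric])
  ultimately show ?thesis by simp
next
  case False
  define y0 where "y0 = snd P"
  define u where "u = X_var - cb (fst P)"
  have i1: "u \<in> I_pt h P" unfolding u_def by (rule gen_X)
  have e: "Y_var - cb (snd (iota P)) = Y_var + cb y0" by (simp add: cb_def y0_def)
  have j1: "Y_var + cb y0 \<in> I_pt h (iota P)" using gen_Y[of "iota P"] unfolding e .
  have i2: "Y_var - cb y0 \<in> I_pt h P" using gen_Y[of P] by (simp add: y0_def)
  have j2: "u \<in> I_pt h (iota P)" using gen_X[of "iota P"] by (simp add: u_def)
  have "u * (Y_var + cb y0) - (Y_var - cb y0) * u \<in> KK (I_pt h P) (I_pt h (iota P))"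
    using KK_prod[OF i1 j1] KK_prod[OF i2 j2] by (rule is_id_diff[OF is_id_KK])
  then have "cb (1 / (2 * y0)) * (u * (Y_var + cb y0) - (Y_var - cb y0) * u) \<in> KK (I_pt h P) (I_pt h (iota P))"
    by (rule is_id_mult[OF is_id_KK])
  moreover have "cb (1 / (2 * y0)) * (u * (Y_var + cb y0) - (Y_var - cb y0) * u) = u"
  proof -
    have "u * (Y_var + cb y0) - (Y_var - cb y0) * u = cb (2 * y0) * u"
      by (simp add: algebra_simps cb_mult cb_add[symmetric] mult_2 cb2)
    moreover have "cb (1 / (2 * y0)) * cb (2 * y0) = 1" using False by (simp add: cb_mult[symmetric] y0_def)
    ultimately show ?thesis by (simp add: mult.assoc[symmetric])
  qed
  ultimately show ?thesis by (simp add: u_def)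
qed

end


context hcurve
begin

lemma VsD: "F \<in> Vs A \<Longrightarrow> on_curve h P \<Longrightarrow> F \<in> M P (A P)"
  unfolding Vs_def by blast

lemma ee_iota: "ee (iota P) = ee P" by (simp add: ee_def)

lemma L_b:
  assumes P0: "on_curve h P0" and b: "b \<in> Vs (B(P0 := Suc (B P0)))" and j: "j \<in> I_pt h (iota P0)"
  shows "\<exists>c \<in> Vs B. b * j - (X_var - cb (fst P0)) * c \<in> I_C h"
proof -
  define u where "u = X_var - cb (fst P0)"
  have uc: "u = [:[:- fst P0, 1:]:]" by (simp add: u_def Xm_eq)
  have u_nIC: "u \<notin> I_C h" unfolding uc by (rule const_notIC) simp
  have bM: "b \<in> M Q (if Q = P0 then Suc (B P0) else B Q)" if "on_curve h Q" for Q
    using VsD[OF b that] by simp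
  have b1: "b \<in> M P0 1" using bM[OF P0] M_anti[of 1 "Suc (B P0)" P0] by auto
  have j1: "j \<in> M (iota P0) 1" by (rule mP_M1[OF j])
  have "b * j \<in> M Q (ee Q)" if Q: "on_curve h Q" "fst Q = fst P0" for Q
  proof (cases "snd P0 = 0")
    case True
    then have "iota P0 = P0" using iota_eq_iff by blast
    moreover have "Q = P0" using fiber[OF P0 Q(1) Q(2)] \<open>iota P0 = P0\<close> by auto
    ultimately show ?thesis using M_mult[OF b1, of j 1] j1 True by (simp add: ee_def numeral_2_eq_2)
  next
    case False
    have "ee Q = 1" using fiber[OF P0 Q(1) Q(2)] False by (auto simp: ee_def)
    moreover have "b * j \<in> M Q 1"
      using fiber[OF P0 Q(1) Q(2)] b1 j1 is_id_mult2[OF is_id_M] is_id_mult[OF is_id_M] by blast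
    ultimately show ?thesis by simp
  qed
  then obtain c where c: "b * j - u * c \<in> I_C h" using lin_div[of "fst P0" "b * j"] uc by blast
  have "c \<in> Vs B" unfolding Vs_def
  proof (intro CollectI allI impI)
    fix Q assume Q: "on_curve h Q"
    show "c \<in> M Q (B Q)"
    proof (cases "c \<in> I_C h")
      case True then show ?thesis by (rule IC_M)
    next
      case cn: False
      have ucn: "u * c \<notin> I_C h" by (rule IC_mult[OF u_nIC cn])
      have bjn: "b * j \<notin> I_C h"
      proof
        assume "b * j \<in> I_C h"
        then have "b * j - (b * j - u * c) \<in> I_C h" using c is_id_diff[OF is_id_IC] by blast
        then show False using ucn by simp
      qed
      have bn: "b \<notin> I_C h" using bjn is_id_mult2[OF is_id_IC] by blast
      have jn: "j \<notin> I_C h" using bjn is_id_mult[OF is_id_IC] by blast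
      have "v Q (b * j) = v Q (u * c)" by (rule v_IC[OF Q c])
      then have eqv: "v Q b + v Q j = v Q u + v Q c" using v_mult[OF Q bn jn] v_mult[OF Q u_nIC cn] by simp
      have vb: "(if Q = P0 then Suc (B P0) else B Q) \<le> v Q b" using bM[OF Q] M_iff_v[OF Q bn] by blast
      have vj: "Q = iota P0 \<Longrightarrow> 1 \<le> v Q j" using j1 M_iff_v[OF Q jn] by blast
      have vu: "v Q u = (if fst Q = fst P0 then ee Q else 0)" unfolding uc by (rule v_lin[OF Q])
      have "B Q \<le> v Q c"
      proof (cases "fst Q = fst P0")
        case False
        then have "Q \<noteq> P0" by auto
        then show ?thesis using eqv vb vu False by simp
      next
        case True
        show ?thesis
        proof (cases "snd P0 = 0")
          case y0: True
          then have iP: "iota P0 = P0" using iota_eq_iff by blast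
          then have "Q = P0" using fiber[OF P0 Q True] by auto
          then show ?thesis using eqv vb vj vu y0 iP by (simp add: ee_def)
        next
          case y0: False
          then have "ee Q = 1" using fiber[OF P0 Q True] by (auto simp: ee_def)
          moreover have "iota P0 \<noteq> P0" using y0 iota_eq_iff by blast
          ultimately show ?thesis using fiber[OF P0 Q True] eqv vb vj vu True by auto
        qed
      qed
      then show ?thesis using M_iff_v[OF Q cn] by simp
    qed
  qed
  then show ?thesis using c u_def by blast
qed

lemma L:
  assumes P0: "on_curve h P0" and b: "b \<in> Vs (B(P0 := Suc (B P0)))"
  shows "b \<in> KK (I_pt h P0) (Vs B)"
proof -
  define u where "u = X_var - cb (fst P0)"
  have u_nIC: "u \<notin> I_C h" unfolding u_def Xm_eq by (rule const_notIC) simp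
  define S where "S = {z. \<exists>w \<in> KK (I_pt h P0) (Vs B). z - u * w \<in> I_C h}"
  have S: "is_id S"
  proof (rule is_idI)
    show "0 \<in> S" unfolding S_def using is_id_0[OF is_id_KK] is_id_0[OF is_id_IC] by force
  next
    fix x y assume "x \<in> S" "y \<in> S"
    then obtain w1 w2 where w: "w1 \<in> KK (I_pt h P0) (Vs B)" "x - u * w1 \<in> I_C h"
      "w2 \<in> KK (I_pt h P0) (Vs B)" "y - u * w2 \<in> I_C h" unfolding S_def by blast
    have eq: "(x + y) - u * (w1 + w2) = (x - u * w1) + (y - u * w2)" by (simp add: algebra_simps)
    have "(x + y) - u * (w1 + w2) \<in> I_C h" unfolding eq by (rule is_id_add[OF is_id_IC w(2) w(4)])
    moreover have "w1 + w2 \<in> KK (I_pt h P0) (Vs B)" using w is_id_add[OF is_id_KK] by blast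
    ultimately show "x + y \<in> S" unfolding S_def by blast
  next
    fix r x assume "x \<in> S"
    then obtain w where w: "w \<in> KK (I_pt h P0) (Vs B)" "x - u * w \<in> I_C h" unfolding S_def by blast
    have "r * x - u * (r * w) = r * (x - u * w)" by (simp add: algebra_simps)
    then have "r * x - u * (r * w) \<in> I_C h" using w is_id_mult[OF is_id_IC] by simp
    moreover have "r * w \<in> KK (I_pt h P0) (Vs B)" using w is_id_mult[OF is_id_KK] by blast
    ultimately show "r * x \<in> S" unfolding S_def by blast
  qed
  have T: "is_id {x. b * x \<in> S}"
    by (rule is_idI) (use S in \<open>auto simp: distrib_left mult.left_commute intro: is_id_0 is_id_add is_id_mult\<close>)
  have "u \<in> {x. b * x \<in> S}"
  proof -
    have "KK (I_pt h P0) (I_pt h (iota P0)) \<subseteq> {x. b * x \<in> S}"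
    proof (rule KK_least[OF T])
      show "I_C h \<subseteq> {x. b * x \<in> S}"
      proof
        fix c assume "c \<in> I_C h"
        then have "b * c - u * 0 \<in> I_C h" using is_id_mult[OF is_id_IC] by simp
        then show "c \<in> {x. b * x \<in> S}" unfolding S_def using is_id_0[OF is_id_KK] by blast
      qed
    next
      fix i j assume i: "i \<in> I_pt h P0" and j: "j \<in> I_pt h (iota P0)"
      obtain c where c: "c \<in> Vs B" "b * j - u * c \<in> I_C h" using L_b[OF P0 b j] u_def by blast
      have "b * (i * j) - u * (i * c) = i * (b * j - u * c)" by (simp add: algebra_simps)
      then have "b * (i * j) - u * (i * c) \<in> I_C h" using c is_id_mult[OF is_id_IC] by simp
      moreover have "i * c \<in> KK (I_pt h P0) (Vs B)" using KK_prod[OF i c(1)] .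
      ultimately show "i * j \<in> {x. b * x \<in> S}" unfolding S_def by blast
    qed
    then show ?thesis using u_prod[OF P0] u_def by blast
  qed
  then obtain w where w: "w \<in> KK (I_pt h P0) (Vs B)" "b * u - u * w \<in> I_C h" unfolding S_def by blast
  have "u * (b - w) \<in> I_C h" using w(2) by (simp add: algebra_simps)
  then have "b - w \<in> I_C h" using IC_mult[OF u_nIC] by blast
  then have "(b - w) + w \<in> KK (I_pt h P0) (Vs B)" using KK_IC w(1) is_id_add[OF is_id_KK] by blast
  then show ?thesis by simp
qed

lemma step_Vs:
  assumes a: "a \<in> Vs (A(P0 := A P0 - 1))" and i: "i \<in> I_pt h P0" and A: "A P0 \<ge> 1"
  shows "a * i \<in> Vs A"
  unfolding Vs_def
proof (intro CollectI allI impI)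
  fix P assume P: "on_curve h P"
  show "a * i \<in> M P (A P)"
  proof (cases "P = P0")
    case True
    have "a \<in> M P0 (A P0 - 1)" using VsD[OF a, of P0] P True by simp
    then have "a * i \<in> M P0 (A P0 - 1 + 1)" using M_mult mP_M1[OF i] by blast
    then show ?thesis using A True by simp
  next
    case False
    have "a \<in> M P (A P)" using VsD[OF a P] False by simp
    then show ?thesis by (rule is_id_mult2[OF is_id_M])
  qed
qed

lemma deg_eff_super: "finite S \<Longrightarrow> {P. A P \<noteq> 0} \<subseteq> S \<Longrightarrow> deg_eff A = (\<Sum>P\<in>S. A P)"
  unfolding deg_eff_def by (rule sum.mono_neutral_left) auto

lemma PL:
  assumes "finite {P. A P \<noteq> 0}" "\<forall>P. A P \<noteq> 0 \<longrightarrow> on_curve h P"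
  shows "Vs (\<lambda>P. A P + B P) \<subseteq> KK (Vs A) (Vs B)"
  using assms
proof (induction "deg_eff A" arbitrary: A B)
  case 0
  have "\<forall>P\<in>{P. A P \<noteq> 0}. A P = 0" using 0 sum_eq_0_iff[of "{P. A P \<noteq> 0}" A] by (simp add: deg_eff_def)
  then have A0: "\<And>P. A P = 0" by auto
  show ?case
  proof
    fix F assume "F \<in> Vs (\<lambda>P. A P + B P)"
    then have F: "F \<in> Vs B" using A0 by simp
    have "1 \<in> Vs A" using A0 by (simp add: Vs_def M_0)
    then show "F \<in> KK (Vs A) (Vs B)" using KK_prod[OF _ F] by fastforce
  qed
next
  case (Suc n)
  have "\<exists>P0. A P0 \<noteq> 0"
  proof (rule ccontr)
    assume "\<not> (\<exists>P0. A P0 \<noteq> 0)"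
    then have "{P. A P \<noteq> 0} = {}" by auto
    then have "deg_eff A = 0" unfolding deg_eff_def by (simp only: sum.empty)
    then show False using Suc.hyps(2) by simp
  qed
  then obtain P0 where P0: "A P0 \<noteq> 0" by blast
  have P0c: "on_curve h P0" using Suc.prems(2) P0 by blast
  define A' where "A' = A(P0 := A P0 - 1)"
  define B' where "B' = B(P0 := Suc (B P0))"
  let ?S = "{P. A P \<noteq> 0}"
  have fS: "finite ?S" by (rule Suc.prems(1))
  have "deg_eff A = A P0 + (\<Sum>P\<in>?S - {P0}. A P)"
    using deg_eff_super[OF fS, of A] sum.remove[OF fS, of P0 A] P0 by simp
  moreover have "deg_eff A' = A' P0 + (\<Sum>P\<in>?S - {P0}. A' P)"
  proof -
    have sub': "{P. A' P \<noteq> 0} \<subseteq> ?S" by (auto simp: A'_def split: if_splits)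
    have "P0 \<in> ?S" using P0 by simp
    then show ?thesis using deg_eff_super[OF fS sub'] sum.remove[OF fS, of P0 A'] by simp
  qed
  moreover have "(\<Sum>P\<in>?S - {P0}. A' P) = (\<Sum>P\<in>?S - {P0}. A P)" by (simp add: A'_def)
  ultimately have dA': "n = deg_eff A'" using Suc.hyps(2) P0 by (simp add: A'_def)
  have fA': "finite {P. A' P \<noteq> 0}" using fS by (rule rev_finite_subset) (auto simp: A'_def)
  have cA': "\<forall>P. A' P \<noteq> 0 \<longrightarrow> on_curve h P" using Suc.prems(2) P0c by (auto simp: A'_def)
  have IH: "Vs (\<lambda>P. A' P + B' P) \<subseteq> KK (Vs A') (Vs B')" by (rule Suc.hyps(1)[OF dA' fA' cA'])
  have eqAB: "(\<lambda>P. A' P + B' P) = (\<lambda>P. A P + B P)" using P0 by (auto simp: A'_def B'_def)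
  have "KK (Vs A') (Vs B') \<subseteq> KK (Vs A) (Vs B)"
  proof (rule KK_least[OF is_id_KK])
    show "I_C h \<subseteq> KK (Vs A) (Vs B)" using KK_IC by blast
  next
    fix a b assume a: "a \<in> Vs A'" and b: "b \<in> Vs B'"
    have bK: "b \<in> KK (I_pt h P0) (Vs B)" using L[OF P0c] b by (simp add: B'_def)
    have T: "is_id {x. a * x \<in> KK (Vs A) (Vs B)}"
      by (rule is_idI) (auto simp: distrib_left mult.left_commute intro: is_id_0[OF is_id_KK] is_id_add[OF is_id_KK] is_id_mult[OF is_id_KK])
    have "KK (I_pt h P0) (Vs B) \<subseteq> {x. a * x \<in> KK (Vs A) (Vs B)}"
    proof (rule KK_least[OF T])
      show "I_C h \<subseteq> {x. a * x \<in> KK (Vs A) (Vs B)}" using KK_IC is_id_mult[OF is_id_IC] by blast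
    next
      fix i w assume i: "i \<in> I_pt h P0" and w: "w \<in> Vs B"
      have "a * i \<in> Vs A" using step_Vs[OF _ i] a P0 by (simp add: A'_def)
      then have "(a * i) * w \<in> KK (Vs A) (Vs B)" using KK_prod w by blast
      then show "i * w \<in> {x. a * x \<in> KK (Vs A) (Vs B)}" by (simp add: mult.assoc)
    qed
    then show "a * b \<in> KK (Vs A) (Vs B)" using bK by blast
  qed
  then show ?case using IH eqAB by simp
qed

end


lemma order_prod_gen:
  fixes p :: "'i \<Rightarrow> complex poly"
  assumes "finite S" "\<And>i. i \<in> S \<Longrightarrow> p i \<noteq> 0"
  shows "order x (\<Prod>i\<in>S. p i) = (\<Sum>i\<in>S. order x (p i))"
  using assms
proof (induction S rule: finite_induct)
  case empty then show ?case by simp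
next
  case (insert a S)
  have "(\<Prod>i\<in>S. p i) \<noteq> 0" using insert by (simp add: prod_zero_iff)
  then have "p a * (\<Prod>i\<in>S. p i) \<noteq> 0" using insert by simp
  then show ?case using insert by (simp add: order_mult)
qed

lemma order_lin_pow: "order x ([:- a, 1:] ^ k) = (if x = a then k else (0::nat))"
proof (cases "x = a")
  case True then show ?thesis using order_power_n_n[of a k] by simp
next
  case False
  then have "poly ([:- a, 1:] ^ k) x \<noteq> 0" by simp
  then show ?thesis using False by (simp add: order_0I)
qed

lemma deg_eff_iota: "finite {P. A P \<noteq> 0} \<Longrightarrow> deg_eff (\<lambda>Q. A (iota Q)) = deg_eff A"
proof -
  assume fin: "finite {P. A P \<noteq> 0}"
  have S: "{Q. A (iota Q) \<noteq> 0} = iota ` {P. A P \<noteq> 0}"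
    by (auto intro: image_eqI[of _ iota "iota _"])
  have inj: "inj_on iota {P. A P \<noteq> 0}" by (rule inj_on_subset[OF inj_iota]) simp
  show ?thesis unfolding deg_eff_def S sum.reindex[OF inj] by simp
qed

lemma deg_w_mono:
  "lead_mono g f = lead_mono g G \<or> mono_less g (lead_mono g f) (lead_mono g G) \<Longrightarrow> deg_w g f \<le> deg_w g G"
  by (auto simp: deg_w_def mono_less_def)

context hcurve
begin

lemma conj_Vs: "F \<in> Vs A \<Longrightarrow> conj_bp F \<in> Vs (\<lambda>Q. A (iota Q))"
  unfolding Vs_def
proof (intro CollectI allI impI)
  fix Q assume F: "F \<in> {F. \<forall>P. on_curve h P \<longrightarrow> F \<in> M P (A P)}" and Q: "on_curve h Q"
  have "F \<in> M (iota Q) (A (iota Q))" using F Q on_curve_iota by blast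
  then show "conj_bp F \<in> M Q (A (iota Q))" using conj_M[of F "iota Q"] by simp
qed

lemma eff_iota: "effective h A \<Longrightarrow> effective h (\<lambda>Q. A (iota Q))"
proof -
  assume A: "effective h A"
  have S: "{Q. A (iota Q) \<noteq> 0} = iota ` {P. A P \<noteq> 0}"
    by (auto intro: image_eqI[of _ iota "iota _"])
  show ?thesis using A unfolding effective_def S by (metis finite_imageI iota_iota on_curve_iota)
qed

lemma J_sub:
  assumes Dp: "effective h Dp" and Dm: "effective h Dm"
  shows "KK (I_div h Dp) (conj_ideal (I_div h Dm)) \<subseteq> Vs (\<lambda>P. Dp P + Dm (iota P))"
proof (rule KK_least[OF is_id_Vs])
  show "I_C h \<subseteq> Vs (\<lambda>P. Dp P + Dm (iota P))" using IC_Vs by blast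
next
  fix a b assume a: "a \<in> I_div h Dp" and b: "b \<in> conj_ideal (I_div h Dm)"
  have aV: "a \<in> Vs Dp" using a I_div_Vs[OF Dp] by simp
  obtain b' where b': "b = conj_bp b'" "b' \<in> I_div h Dm" using b by (auto simp: conj_ideal_def)
  have bV: "b \<in> Vs (\<lambda>Q. Dm (iota Q))" using conj_Vs[of b' Dm] b' I_div_Vs[OF Dm] by simp
  show "a * b \<in> Vs (\<lambda>P. Dp P + Dm (iota P))" unfolding Vs_def
    using VsD[OF aV] VsD[OF bV] M_mult by blast
qed

lemma J_sup:
  assumes Dp: "effective h Dp" and Dm: "effective h Dm"
  shows "Vs (\<lambda>P. Dp P + Dm (iota P)) \<subseteq> KK (I_div h Dp) (conj_ideal (I_div h Dm))"
proof -
  have e2: "effective h (\<lambda>Q. Dm (iota Q))" by (rule eff_iota[OF Dm])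
  have "Vs (\<lambda>P. Dp P + Dm (iota P)) \<subseteq> KK (Vs Dp) (Vs (\<lambda>Q. Dm (iota Q)))"
    using Dp by (intro PL) (auto simp: effective_def)
  also have "\<dots> \<subseteq> KK (I_div h Dp) (conj_ideal (I_div h Dm))"
  proof (rule KK_mono)
    show "Vs Dp \<subseteq> I_div h Dp" using I_div_Vs[OF Dp] by simp
    show "Vs (\<lambda>Q. Dm (iota Q)) \<subseteq> conj_ideal (I_div h Dm)"
    proof
      fix F assume "F \<in> Vs (\<lambda>Q. Dm (iota Q))"
      then have "conj_bp F \<in> Vs Dm" using conj_Vs[of F "\<lambda>Q. Dm (iota Q)"] by simp
      then have "conj_bp F \<in> I_div h Dm" using I_div_Vs[OF Dm] by simp
      then show "F \<in> conj_ideal (I_div h Dm)" unfolding conj_ideal_def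
        by (rule image_eqI[rotated]) simp
    qed
  qed
  finally show ?thesis .
qed

lemma div_of_some: "on_curve h P \<Longrightarrow> F \<notin> I_C h \<Longrightarrow> div_of g h F (Some P) = int (v P F)"
  by (simp add: div_of_def ord_fin_v)
lemma div_of_off: "\<not> on_curve h P \<Longrightarrow> div_of g h F (Some P) = 0"
  by (simp add: div_of_def)
lemma div_of_none: "F \<notin> I_C h \<Longrightarrow> div_of g h F None = - int (degree (nrm F))"
  by (simp add: div_of_def ord_inf_nrm)

lemma MV: "on_curve h P \<Longrightarrow> F \<notin> I_C h \<Longrightarrow> F \<in> Vs A \<Longrightarrow> A P \<le> v P F"
  using VsD M_iff_v by blast

lemma VM: "F \<notin> I_C h \<Longrightarrow> (\<And>P. on_curve h P \<Longrightarrow> A P \<le> v P F) \<Longrightarrow> F \<in> Vs A"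
  unfolding Vs_def using M_iff_v by blast

end


locale msetup = hcurve +
  fixes Dp Dm :: "point \<Rightarrow> nat" and f :: bpoly
  assumes Dp_eff: "effective h Dp" and Dm_eff: "effective h Dm"
    and f_in: "f \<in> gen_ideal (ideal_prod (I_div h Dp) (conj_ideal (I_div h Dm)) \<union> I_C h)"
    and f_notin: "f \<notin> I_C h"
    and f_red: "degree f \<le> 1"
    and f_min: "\<forall>G \<in> gen_ideal (ideal_prod (I_div h Dp) (conj_ideal (I_div h Dm)) \<union> I_C h) - I_C h.
                  lead_mono g f = lead_mono g G \<or> mono_less g (lead_mono g f) (lead_mono g G)"
begin

lemma effD: "effective h A \<Longrightarrow> A P \<noteq> 0 \<Longrightarrow> on_curve h P"
  unfolding effective_def by blast

definition D :: "point \<Rightarrow> nat" where "D P = Dp P + Dm (iota P)"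
definition E :: "point \<Rightarrow> nat" where "E P = (if on_curve h P then v P f - D P else 0)"
definition n :: nat where "n = deg_w g f"
definition Z :: "point set" where "Z = {P. on_curve h P \<and> v P f \<noteq> 0}"

lemma J_eq: "gen_ideal (ideal_prod (I_div h Dp) (conj_ideal (I_div h Dm)) \<union> I_C h) = KK (I_div h Dp) (conj_ideal (I_div h Dm))"
  by (simp add: KK_def)

lemma fV: "f \<in> Vs D"
  using J_sub[OF Dp_eff Dm_eff] f_in J_eq unfolding D_def[abs_def] by blast

lemma vf: "on_curve h P \<Longrightarrow> D P \<le> v P f"
  using MV[OF _ f_notin fV] .

lemma vfE: "on_curve h P \<Longrightarrow> v P f = D P + E P"
  using vf by (simp add: E_def)

lemma n_nrm: "n = degree (nrm f)"
  unfolding n_def by (rule degw_nrm[OF f_red f_notin])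

lemma Z_fin: "finite Z" unfolding Z_def by (rule sum_v(1)[OF f_notin])

lemma sumZ: "(\<Sum>P\<in>Z. v P f) = n"
  unfolding Z_def n_nrm by (rule sum_v(2)[OF f_notin])

lemma E_supp: "{P. E P \<noteq> 0} \<subseteq> Z"
  using vfE by (auto simp: Z_def E_def split: if_splits)

lemma effE: "effective h E"
  unfolding effective_def using finite_subset[OF E_supp Z_fin] by (auto simp: E_def split: if_splits)

lemma Dp_supp: "{P. Dp P \<noteq> 0} \<subseteq> Z"
proof
  fix P assume "P \<in> {P. Dp P \<noteq> 0}"
  then have P: "on_curve h P" "Dp P \<noteq> 0" using effD[OF Dp_eff] by auto
  then show "P \<in> Z" using vf[OF P(1)] by (auto simp: Z_def D_def)
qed

lemma Dm_supp: "{P. Dm (iota P) \<noteq> 0} \<subseteq> Z"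
proof
  fix P assume "P \<in> {P. Dm (iota P) \<noteq> 0}"
  then have P: "on_curve h P" "Dm (iota P) \<noteq> 0" using effD[OF Dm_eff, of "iota P"] by auto
  then show "P \<in> Z" using vf[OF P(1)] by (auto simp: Z_def D_def)
qed

lemma degE: "int (deg_eff E) = int n - int (deg_eff Dp) - int (deg_eff Dm)"
proof -
  have fDm: "finite {P. Dm P \<noteq> 0}" using Dm_eff by (simp add: effective_def)
  have "int (deg_eff E) = (\<Sum>P\<in>Z. int (E P))"
    using deg_eff_super[OF Z_fin E_supp] by simp
  also have "\<dots> = (\<Sum>P\<in>Z. int (v P f) - int (Dp P) - int (Dm (iota P)))"
  proof (intro sum.cong refl)
    fix P assume "P \<in> Z"
    then have "on_curve h P" by (simp add: Z_def)
    then show "int (E P) = int (v P f) - int (Dp P) - int (Dm (iota P))"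
      using vfE[of P] by (simp add: D_def)
  qed
  also have "\<dots> = (\<Sum>P\<in>Z. int (v P f)) - (\<Sum>P\<in>Z. int (Dp P)) - (\<Sum>P\<in>Z. int (Dm (iota P)))"
    by (simp add: sum_subtractf)
  also have "(\<Sum>P\<in>Z. int (v P f)) = int n" using sumZ by (simp flip: of_nat_sum)
  also have "(\<Sum>P\<in>Z. int (Dp P)) = int (deg_eff Dp)"
    using deg_eff_super[OF Z_fin Dp_supp] by simp
  also have "(\<Sum>P\<in>Z. int (Dm (iota P))) = int (deg_eff Dm)"
    using deg_eff_super[OF Z_fin, of "\<lambda>Q. Dm (iota Q)"] Dm_supp deg_eff_iota[OF fDm] by simp
  finally show ?thesis .
qed

lemma divf: "div_of g h f Q = (case Q of None \<Rightarrow> - int n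
     | Some P \<Rightarrow> int (Dp P) + int (Dm (iota P)) + int (E P))"
proof (cases Q)
  case None
  then show ?thesis using div_of_none[OF f_notin] n_nrm by simp
next
  case (Some P)
  show ?thesis
  proof (cases "on_curve h P")
    case True
    then show ?thesis using Some div_of_some[OF True f_notin] vfE[OF True] by (simp add: D_def)
  next
    case False
    have "Dp P = 0" using effD[OF Dp_eff] False by blast
    moreover have "Dm (iota P) = 0" using effD[OF Dm_eff, of "iota P"] False by auto
    ultimately show ?thesis using Some False div_of_off by (simp add: E_def)
  qed
qed

end


context msetup
begin

definition cD :: "complex poly" where
  "cD = (\<Prod>P\<in>{P. Dp P \<noteq> 0}. [:- fst P, 1:] ^ Dp P)"

lemma fDp: "finite {P. Dp P \<noteq> 0}" using Dp_eff by (simp add: effective_def)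

lemma cD_nz: "cD \<noteq> 0"
  unfolding cD_def using fDp by (simp add: prod_zero_iff)

lemma cD_deg: "degree cD = deg_eff Dp"
proof -
  have "degree cD = (\<Sum>P\<in>{P. Dp P \<noteq> 0}. degree ([:- fst P, 1:] ^ Dp P))"
    unfolding cD_def by (rule degree_prod_sum_eq) simp
  also have "\<dots> = deg_eff Dp" by (simp add: deg_eff_def degree_linear_power)
  finally show ?thesis .
qed

lemma cD_order: "order x cD = (\<Sum>Q\<in>{P. Dp P \<noteq> 0}. if x = fst Q then Dp Q else 0)"
  unfolding cD_def using fDp by (subst order_prod_gen) (simp_all add: order_lin_pow)

lemma cD_v: assumes P: "on_curve h P" shows "v P [:cD:] = Dp P + Dp (iota P)"
proof -
  let ?S = "{P. Dp P \<noteq> 0}"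
  let ?T = "{P, iota P}"
  let ?f = "\<lambda>Q. if fst P = fst Q then Dp Q else 0"
  have "(\<Sum>Q\<in>?S. ?f Q) = (\<Sum>Q\<in>?S \<union> ?T. ?f Q)"
    using fDp by (intro sum.mono_neutral_left) auto
  also have "\<dots> = (\<Sum>Q\<in>?T. ?f Q)"
  proof (rule sum.mono_neutral_right)
    show "finite (?S \<union> ?T)" using fDp by simp
    show "?T \<subseteq> ?S \<union> ?T" by blast
    show "\<forall>Q\<in>?S \<union> ?T - ?T. ?f Q = 0"
    proof
      fix Q assume Q: "Q \<in> ?S \<union> ?T - ?T"
      then have "on_curve h Q" using effD[OF Dp_eff] by blast
      then show "?f Q = 0" using fiber[OF P, of Q] Q by auto
    qed
  qed
  finally have s: "(\<Sum>Q\<in>?S. ?f Q) = (\<Sum>Q\<in>?T. ?f Q)" .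
  show ?thesis
  proof (cases "snd P = 0")
    case True
    then have "iota P = P" using iota_eq_iff by blast
    then show ?thesis using v_const[OF P cD_nz] cD_order s True by (simp add: ee_def)
  next
    case False
    then have "iota P \<noteq> P" using iota_eq_iff by blast
    then show ?thesis using v_const[OF P cD_nz] cD_order s False by (simp add: ee_def)
  qed
qed

lemma fE: "finite {P. E P \<noteq> 0}" using effE by (simp add: effective_def)

lemma degEi: "deg_eff (E \<circ> iota) = deg_eff E"
  using deg_eff_iota[OF fE] by (simp add: comp_def)

lemma conj_f: "conj_bp f \<notin> I_C h" using f_notin conj_IC_iff by blast

lemma lin: "lin_equiv g h (semired (E \<circ> iota))
             (\<lambda>Q. case Q of None \<Rightarrow> - (int (deg_eff Dp) - int (deg_eff Dm))
                  | Some P \<Rightarrow> int (Dp P) - int (Dm P))"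
  unfolding lin_equiv_def
proof (intro exI conjI allI)
  show "conj_bp f \<notin> I_C h" by (rule conj_f)
  show cn: "[:cD:] \<notin> I_C h" by (rule const_notIC[OF cD_nz])
  fix Q
  show "semired (E \<circ> iota) Q - (case Q of None \<Rightarrow> - (int (deg_eff Dp) - int (deg_eff Dm))
                  | Some P \<Rightarrow> int (Dp P) - int (Dm P)) = div_of g h (conj_bp f) Q - div_of g h [:cD:] Q"
  proof (cases Q)
    case None
    have "degree (nrm [:cD:]) = 2 * deg_eff Dp" using cD_nz cD_deg by (simp add: nrm_const degree_mult_eq)
    then show ?thesis using None div_of_none[OF conj_f] div_of_none[OF cn] degE degEi n_nrm
      by (simp add: semired_def nrm_conj)
  next
    case (Some P)
    show ?thesis
    proof (cases "on_curve h P")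
      case True
      have "v P (conj_bp f) = v (iota P) f" by (rule v_conj'[OF True f_notin])
      also have "\<dots> = Dp (iota P) + Dm P + E (iota P)" using vfE[of "iota P"] True by (simp add: D_def)
      finally show ?thesis using Some div_of_some[OF True conj_f] div_of_some[OF True cn] cD_v[OF True]
        by (simp add: semired_def)
    next
      case False
      have "Dp P = 0" "Dm P = 0" using effD[OF Dp_eff] effD[OF Dm_eff] False by blast+
      moreover have "E (iota P) = 0" using False by (simp add: E_def)
      ultimately show ?thesis using Some False div_of_off by (simp add: semired_def)
    qed
  qed
qed

end


context msetup
begin

lemma red_main:
  assumes E': "effective h E'" and le: "lin_equiv g h (semired E') (semired (E \<circ> iota))"
  shows "deg_eff (E \<circ> iota) \<le> deg_eff E'"
proof (rule ccontr)
  assume "\<not> deg_eff (E \<circ> iota) \<le> deg_eff E'"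
  then have lt: "deg_eff E' < deg_eff E" using degEi by simp
  obtain F G where F: "F \<notin> I_C h" and G: "G \<notin> I_C h"
    and eq: "\<And>Q. semired E' Q - semired (E \<circ> iota) Q = div_of g h F Q - div_of g h G Q"
    using le unfolding lin_equiv_def by blast
  have cF: "conj_bp F \<notin> I_C h" using F conj_IC_iff by blast
  define c where "c = nrm G"
  have c0: "c \<noteq> 0" unfolding c_def by (rule nrm_nz[OF G])
  have cn: "[:c:] \<notin> I_C h" by (rule const_notIC[OF c0])
  define \<Psi> where "\<Psi> = f * conj_bp F * G"
  have \<Psi>n: "\<Psi> \<notin> I_C h" unfolding \<Psi>_def using IC_mult f_notin cF G by blast
  have vPsi: "int (v P \<Psi>) = int (v P [:c:]) + int (D P) + int (E' (iota P))" if P: "on_curve h P" for P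
  proof -
    have iP: "on_curve h (iota P)" using P by simp
    have "v P \<Psi> = v P f + v P (conj_bp F) + v P G"
      unfolding \<Psi>_def using v_mult[OF P] IC_mult f_notin cF G by simp
    also have "v P (conj_bp F) = v (iota P) F" by (rule v_conj'[OF P F])
    finally have a: "v P \<Psi> = v P f + v (iota P) F + v P G" .
    have "int (E' (iota P)) - int (E P) = int (v (iota P) F) - int (v (iota P) G)"
      using eq[of "Some (iota P)"] div_of_some[OF iP F] div_of_some[OF iP G]
      by (simp add: semired_def)
    moreover have "v P [:c:] = v P G + v (iota P) G" unfolding c_def by (rule v_nrm[OF P G])
    moreover have "v P f = D P + E P" by (rule vfE[OF P])
    ultimately show ?thesis using a by simp
  qed
  have "\<Psi> \<in> M P (v P [:c:])" if P: "on_curve h P" for P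
    using vPsi[OF P] M_iff_v[OF P \<Psi>n] by simp
  then obtain \<phi> where \<phi>: "\<Psi> - [:c:] * \<phi> \<in> I_C h" using division[OF c0] by blast
  have \<phi>n: "\<phi> \<notin> I_C h"
  proof
    assume "\<phi> \<in> I_C h"
    then have "[:c:] * \<phi> \<in> I_C h" by (rule is_id_mult[OF is_id_IC])
    then have "(\<Psi> - [:c:] * \<phi>) + [:c:] * \<phi> \<in> I_C h" using \<phi> is_id_add[OF is_id_IC] by blast
    then show False using \<Psi>n by simp
  qed
  have cphi: "[:c:] * \<phi> \<notin> I_C h" by (rule IC_mult[OF cn \<phi>n])
  have vphi: "D P \<le> v P \<phi>" if P: "on_curve h P" for P
  proof -
    have "v P \<Psi> = v P ([:c:] * \<phi>)" by (rule v_IC[OF P \<phi>])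
    also have "\<dots> = v P [:c:] + v P \<phi>" by (rule v_mult[OF P cn \<phi>n])
    finally show ?thesis using vPsi[OF P] by simp
  qed
  have \<phi>V: "\<phi> \<in> Vs D" using VM[OF \<phi>n vphi] .
  have \<phi>J: "\<phi> \<in> KK (I_div h Dp) (conj_ideal (I_div h Dm))"
    using J_sup[OF Dp_eff Dm_eff] \<phi>V unfolding D_def[abs_def] by blast
  define \<phi>r where "\<phi>r = red \<phi>"
  have d: "\<phi> - \<phi>r \<in> I_C h" unfolding \<phi>r_def by (rule red_props(1))
  have \<phi>rJ: "\<phi>r \<in> KK (I_div h Dp) (conj_ideal (I_div h Dm))"
  proof -
    have "\<phi> - (\<phi> - \<phi>r) \<in> KK (I_div h Dp) (conj_ideal (I_div h Dm))"
      using \<phi>J KK_IC[OF d] is_id_diff[OF is_id_KK] by blast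
    then show ?thesis by simp
  qed
  have \<phi>rn: "\<phi>r \<notin> I_C h"
  proof
    assume "\<phi>r \<in> I_C h"
    then have "(\<phi> - \<phi>r) + \<phi>r \<in> I_C h" using d is_id_add[OF is_id_IC] by blast
    then show False using \<phi>n by simp
  qed
  have "deg_w g f \<le> deg_w g \<phi>r"
    using f_min \<phi>rJ \<phi>rn J_eq deg_w_mono by blast
  moreover have "deg_w g \<phi>r = degree (nrm \<phi>)"
    using degw_nrm[OF _ \<phi>rn] red_props(2) nrm_IC[OF d] by (simp add: \<phi>r_def)
  ultimately have nle: "n \<le> degree (nrm \<phi>)" by (simp add: n_def)
  have "nrm \<Psi> = nrm ([:c:] * \<phi>)" by (rule nrm_IC[OF \<phi>])
  also have "\<dots> = nrm [:c:] * nrm \<phi>" by (rule nrm_mult)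
  finally have "nrm \<Psi> = c * c * nrm \<phi>" by (simp only: nrm_const)
  moreover have "nrm \<Psi> = nrm f * nrm F * c"
    by (simp add: \<Psi>_def nrm_mult nrm_conj c_def)
  ultimately have "nrm f * nrm F * c = c * c * nrm \<phi>" by simp
  then have "degree (nrm f) + degree (nrm F) + degree c = degree c + degree c + degree (nrm \<phi>)"
    using nrm_nz[OF f_notin] nrm_nz[OF F] c0 nrm_nz[OF \<phi>n]
    by (metis degree_mult_eq mult_eq_0_iff)
  then have dphi: "int (degree (nrm \<phi>)) = int n + int (degree (nrm F)) - int (degree c)"
    using n_nrm by simp
  have "- int (deg_eff E') + int (deg_eff E) = - int (degree (nrm F)) + int (degree c)"
    using eq[of None] div_of_none[OF F] div_of_none[OF G] degEi by (simp add: semired_def c_def)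
  then show False using dphi nle lt by linarith
qed

lemma reduced: "is_reduced g h (semired (E \<circ> iota))"
  unfolding is_reduced_def
proof (intro exI conjI allI impI)
  show "effective h (E \<circ> iota)" using eff_iota[OF effE] by (simp add: comp_def)
  show "semired (E \<circ> iota) = semired (E \<circ> iota)" ..
  fix E' assume "effective h E' \<and> lin_equiv g h (semired E') (semired (E \<circ> iota))"
  then show "deg_eff (E \<circ> iota) \<le> deg_eff E'" using red_main by blast
qed

theorem main:
  "\<exists>E. effective h E \<and>
           int (deg_eff E) = int (deg_w g f) - int (deg_eff Dp) - int (deg_eff Dm) \<and>
           (\<forall>Q. div_of g h f Q = (case Q of None \<Rightarrow> - int (deg_w g f)
                  | Some P \<Rightarrow> int (Dp P) + int (Dm (iota P)) + int (E P))) \<and>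
           is_reduced g h (semired (E \<circ> iota)) \<and>
           lin_equiv g h (semired (E \<circ> iota))
             (\<lambda>Q. case Q of None \<Rightarrow> - (int (deg_eff Dp) - int (deg_eff Dm))
                  | Some P \<Rightarrow> int (Dp P) - int (Dm P))"
  using effE degE divf reduced lin unfolding n_def by blast

end


lemma hcurve_of:
  fixes g :: nat and a :: complex and xs :: "nat \<Rightarrow> complex" and h :: "complex poly"
  assumes a_nz: "a \<noteq> 0"
    and xs_distinct: "inj_on xs {..<2 * g + 1}"
    and h_def: "h = smult a (\<Prod>i<2 * g + 1. [: - xs i, 1 :])"
  shows "hcurve g h"
proof
  show "degree h = 2 * g + 1"
  proof -
    have "degree (\<Prod>i<2 * g + 1. [: - xs i, 1 :]) = (\<Sum>i<2 * g + 1. degree [: - xs i, 1 :])"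
      by (rule degree_prod_sum_eq) simp
    then show ?thesis using a_nz by (simp add: h_def)
  qed
  fix x0
  have "order x0 h = order x0 (\<Prod>i<2 * g + 1. [: - xs i, 1 :])"
    using a_nz by (simp add: h_def order_smult)
  also have "\<dots> = (\<Sum>i<2 * g + 1. order x0 [: - xs i, 1 :])"
    by (rule order_prod_gen) simp_all
  also have "\<dots> = (\<Sum>i<2 * g + 1. if x0 = xs i then 1 else 0)"
    by (intro sum.cong refl) (use order_lin_pow[of x0 _ 1] in simp)
  also have "\<dots> = (\<Sum>i\<in>{i \<in> {..<2 * g + 1}. x0 = xs i}. 1)"
    by (rule sum.inter_filter[symmetric]) simp
  also have "\<dots> = card {i \<in> {..<2 * g + 1}. x0 = xs i}"
    by (rule card_eq_sum[symmetric])
  also have "\<dots> \<le> 1"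
  proof -
    have "finite {i \<in> {..<2 * g + 1}. x0 = xs i}" by simp
    moreover have "\<forall>i\<in>{i \<in> {..<2 * g + 1}. x0 = xs i}. \<forall>j\<in>{i \<in> {..<2 * g + 1}. x0 = xs i}. i = j"
      using xs_distinct unfolding inj_on_def by blast
    ultimately have "card {i \<in> {..<2 * g + 1}. x0 = xs i} \<le> Suc 0" using card_le_Suc0_iff_eq by blast
    then show ?thesis by simp
  qed
  finally show "order x0 h \<le> 1" .
qed

theorem lemma9:
  fixes g :: nat and a :: complex and xs :: "nat \<Rightarrow> complex" and h :: "complex poly"
    and Dp Dm :: "point \<Rightarrow> nat" and f :: bpoly
  assumes a_nz: "a \<noteq> 0"
    and xs_distinct: "inj_on xs {..<2 * g + 1}"
    and h_def: "h = smult a (\<Prod>i<2 * g + 1. [: - xs i, 1 :])"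
    and Dp_eff: "effective h Dp" and Dm_eff: "effective h Dm"
    and f_in: "f \<in> gen_ideal (ideal_prod (I_div h Dp) (conj_ideal (I_div h Dm)) \<union> I_C h)"
    and f_notin: "f \<notin> I_C h"
    and f_reduced: "degree f \<le> 1"
    and f_min: "\<forall>G \<in> gen_ideal (ideal_prod (I_div h Dp) (conj_ideal (I_div h Dm)) \<union> I_C h) - I_C h.
                  lead_mono g f = lead_mono g G \<or> mono_less g (lead_mono g f) (lead_mono g G)"
  shows "\<exists>E. effective h E \<and>
           int (deg_eff E) = int (deg_w g f) - int (deg_eff Dp) - int (deg_eff Dm) \<and>
           (\<forall>Q. div_of g h f Q = (case Q of None \<Rightarrow> - int (deg_w g f)
                  | Some P \<Rightarrow> int (Dp P) + int (Dm (iota P)) + int (E P))) \<and>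
           is_reduced g h (semired (E \<circ> iota)) \<and>
           lin_equiv g h (semired (E \<circ> iota))
             (\<lambda>Q. case Q of None \<Rightarrow> - (int (deg_eff Dp) - int (deg_eff Dm))
                  | Some P \<Rightarrow> int (Dp P) - int (Dm P))"
proof -
  interpret hcurve g h by (rule hcurve_of[OF a_nz xs_distinct h_def])
  interpret msetup g h Dp Dm f
    by unfold_locales (use Dp_eff Dm_eff f_in f_notin f_reduced f_min in auto)
  show ?thesis by (rule main)
qed


end
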